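(* Let $\Gamma$ be a lattice satisfying the standing assumptions below. Let $S_E\subseteq C_1(\Gamma)$ be the set of edges with nonzero syndrome of some bit-flip error, i.e. $S_E=\partial(F_0)$ for some set of faces $F_0$, and let $\mathcal{E}$ be the set of faces returned by Procedure P1 on input $S_E$. Then there exists a unique set of faces $\hat{\mathcal{E}}\subseteq\mathcal{E}$ such that $\partial(\hat{\mathcal{E}})=S_E$.
   Context: $\Gamma$ is a finite, connected three-dimensional cell complex with edges $C_1(\Gamma)$ (partial edges allowed at the boundary), faces $C_2(\Gamma)$, volumes $C_3(\Gamma)$; $\partial(f)$ denotes the boundary edges of a face, $\partial(\nu)$ the boundary faces of a volume, $\iota(e)$ the faces containing edge $e$, $\iota(f)$ the volumes having $f$ in their boundary; for a set of faces $F$, $\partial(F)$ is the symmetric difference of the $\partial(f)$, $f\in F$. Every face lies in the boundary of at most two volumes. Standing assumptions: (L1) $\Gamma$ has no boundaries in its interior; (L2) the boundary of every face of $\Gamma$ and of its dual $\Gamma^*$ is a closed path or an open path beginning and ending with partial edges; the dual complex is connected. The 3D toric code on $\Gamma$: one qubit per face, stabilizer group generated by $B_e=\prod_{f\in\iota(e)}Z_f$ and $A_\nu=\prod_{f\in\partial(\nu)}X_f$; a logical operator is a Pauli operator commuting with all stabilizers but not in the stabilizer group (up to phase); $X_A=\prod_{f\in A}X_f$. A face path is a sequence of faces $\rho=(f_1,\dots,f_m)$ with pairwise distinct volumes $\Lambda(\rho)=(\nu_1,\dots,\nu_{m-1})$, $f_i,f_{i+1}\in\partial(\nu_i)$. Let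 $\mathcal{F}=\{f:|\iota(f)|=1\}$; faces $f,f'\in\mathcal{F}$ are face-equivalent if some face path $\rho$ from $f$ to $f'$ makes $\prod_{g\in\rho}Z_g$ a stabilizer (each face equivalent to itself); as in the paper this is an equivalence relation with classes $\mathcal{F}_1,\dots,\mathcal{F}_K$. The augmented lattice $\tilde\Gamma$ has the faces of $\Gamma$ and the volumes of $\Gamma$ plus new volumes $\bar\nu_i$ with $\partial(\bar\nu_i)=\mathcal{F}_i$. A set of faces $K$ is a cut set in $\tilde\Gamma$ if there are volumes $\nu,\nu'$ of $\tilde\Gamma$ such that every face path $\rho$ in $\tilde\Gamma$ with $f_1\in\partial(\nu)$, $f_m\in\partial(\nu')$, $\nu,\nu'\notin\Lambda(\rho)$ meets $K$. Procedure P1 (input $S_E$): set $\mathcal{E}=\emptyset$, $B=S_E$, all faces unexplored. Repeat rounds until all faces are explored: set $B'=\emptyset$; for each unexplored face $f$ with $\partial(f)\cap B\neq\emptyset$, mark $f$ explored and, if $\mathcal{E}\cup\{f\}$ is not a cut set in $\tilde\Gamma$, set $\mathcal{E}\leftarrow\mathcal{E}\cup\{f\}$ and $B'\leftarrow B'\cup\partial(f)$; at the end of the round set $B\leftarrow B'\setminus B$. It is assumed that the procedure terminates with every face explored; it returns $\mathcal{E}$. *)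

theory Defs
  imports Main
begin

record ('x, 'e, 'f, 'v) complex3 =
  verts :: "'x set"
  edges :: "'e set"
  faces :: "'f set"
  vols  :: "'v set"
  ends  :: "'e \<Rightarrow> 'x set"
  bdf   :: "'f \<Rightarrow> 'e set"
  bdv   :: "'v \<Rightarrow> 'f set"

definition symdiff :: "'a set \<Rightarrow> 'a set \<Rightarrow> 'a set" where
  "symdiff A B = (A - B) \<union> (B - A)"

definition partial_edge :: "('x, 'e, 'f, 'v) complex3 \<Rightarrow> 'e \<Rightarrow> bool" where
  "partial_edge G e \<longleftrightarrow> card (ends G e) = 1"

definition cell_complex3 :: "('x, 'e, 'f, 'v) complex3 \<Rightarrow> bool" where
  "cell_complex3 G \<longleftrightarrow>
     finite (verts G) \<and> finite (edges G) \<and> finite (faces G) \<and> finite (vols G) \<and>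
     (\<forall>e\<in>edges G. ends G e \<subseteq> verts G \<and> (card (ends G e) = 1 \<or> card (ends G e) = 2)) \<and>
     (\<forall>f\<in>faces G. bdf G f \<subseteq> edges G) \<and>
     (\<forall>v\<in>vols G. bdv G v \<subseteq> faces G \<and> bdv G v \<noteq> {})"

definition iota_e :: "('x, 'e, 'f, 'v) complex3 \<Rightarrow> 'e \<Rightarrow> 'f set" where
  "iota_e G e = {f \<in> faces G. e \<in> bdf G f}"

definition iota_f :: "('x, 'e, 'f, 'v) complex3 \<Rightarrow> 'f \<Rightarrow> 'v set" where
  "iota_f G f = {v \<in> vols G. f \<in> bdv G v}"

definition at_most_two_vols :: "('x, 'e, 'f, 'v) complex3 \<Rightarrow> bool" where
  "at_most_two_vols G \<longleftrightarrow> (\<forall>f\<in>faces G. card (iota_f G f) \<le> 2)"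

text \<open>\<partial>(S) for a set of faces: symmetric difference of the boundaries, i.e. the edges lying
  in the boundary of an odd number of faces of S.\<close>
definition bd_faces :: "('x, 'e, 'f, 'v) complex3 \<Rightarrow> 'f set \<Rightarrow> 'e set" where
  "bd_faces G S = {e \<in> edges G. odd (card {f \<in> S. e \<in> bdf G f})}"

definition is_closed_path :: "('a \<Rightarrow> 'b set) \<Rightarrow> 'a list \<Rightarrow> bool" where
  "is_closed_path endp es \<longleftrightarrow>
     length es \<ge> 2 \<and> distinct es \<and>
     (\<exists>xs. length xs = length es \<and> distinct xs \<and>
        (\<forall>i<length es. endp (es ! i) = {xs ! i, xs ! (Suc i mod length es)}))"

definition is_open_partial_path :: "('a \<Rightarrow> 'b set) \<Rightarrow> 'a list \<Rightarrow> bool" where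
  "is_open_partial_path endp es \<longleftrightarrow>
     length es \<ge> 2 \<and> distinct es \<and>
     (\<exists>xs. Suc (length xs) = length es \<and> distinct xs \<and>
        endp (es ! 0) = {xs ! 0} \<and> endp (last es) = {last xs} \<and>
        (\<forall>i. 0 < i \<and> Suc i < length es \<longrightarrow> endp (es ! i) = {xs ! (i - 1), xs ! i}))"

definition boundary_is_path :: "('a \<Rightarrow> 'b set) \<Rightarrow> 'a set \<Rightarrow> bool" where
  "boundary_is_path endp S \<longleftrightarrow>
     (\<exists>es. set es = S \<and> (is_closed_path endp es \<or> is_open_partial_path endp es))"

text \<open>In \<Gamma>*, the
  vertices are the volumes of \<Gamma>, the dual edge of a face f has endpoints \<iota>(f) (partial iff
  |\<iota>(f)| = 1), and the dual face of an edge e has boundary \<iota>(e).\<close>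
definition L2 :: "('x, 'e, 'f, 'v) complex3 \<Rightarrow> bool" where
  "L2 G \<longleftrightarrow>
     (\<forall>f\<in>faces G. boundary_is_path (ends G) (bdf G f)) \<and>
     (\<forall>e\<in>edges G. boundary_is_path (iota_f G) (iota_e G e))"

definition conn :: "'a set \<Rightarrow> ('a \<Rightarrow> 'a \<Rightarrow> bool) \<Rightarrow> bool" where
  "conn S adj \<longleftrightarrow> (\<forall>a\<in>S. \<forall>b\<in>S. (\<lambda>x y. x \<in> S \<and> y \<in> S \<and> adj x y)\<^sup>*\<^sup>* a b)"

definition connected_complex :: "('x, 'e, 'f, 'v) complex3 \<Rightarrow> bool" where
  "connected_complex G \<longleftrightarrow> conn (verts G) (\<lambda>x y. \<exists>e\<in>edges G. ends G e = {x, y})"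

definition dual_connected :: "('x, 'e, 'f, 'v) complex3 \<Rightarrow> bool" where
  "dual_connected G \<longleftrightarrow> conn (vols G) (\<lambda>v w. \<exists>f\<in>faces G. iota_f G f = {v, w})"

text \<open>A Pauli operator on the face qubits, up to phase, is given by its X-support and its
  Z-support; multiplication is componentwise symmetric difference.\<close>
type_synonym 'f pauli = "'f set \<times> 'f set"

definition pmult :: "'f pauli \<Rightarrow> 'f pauli \<Rightarrow> 'f pauli" where
  "pmult p q = (symdiff (fst p) (fst q), symdiff (snd p) (snd q))"

inductive_set stab_group :: "('x, 'e, 'f, 'v) complex3 \<Rightarrow> 'f pauli set"
  for G :: "('x, 'e, 'f, 'v) complex3" where
  stab_id: "({}, {}) \<in> stab_group G"
| stab_B: "e \<in> edges G \<Longrightarrow> p \<in> stab_group G \<Longrightarrow> pmult ({}, iota_e G e) p \<in> stab_group G"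
| stab_A: "v \<in> vols G \<Longrightarrow> p \<in> stab_group G \<Longrightarrow> pmult (bdv G v, {}) p \<in> stab_group G"

text \<open>Z-support of prod_{g in rho} Z_g for a sequence of faces rho.\<close>
fun zprod_supp :: "'f list \<Rightarrow> 'f set" where
  "zprod_supp [] = {}"
| "zprod_supp (g # gs) = symdiff {g} (zprod_supp gs)"

definition face_path :: "'w set \<Rightarrow> ('w \<Rightarrow> 'f set) \<Rightarrow> 'f set \<Rightarrow> 'f list \<Rightarrow> 'w list \<Rightarrow> bool" where
  "face_path W bd F fs vs \<longleftrightarrow>
     length fs = Suc (length vs) \<and> set fs \<subseteq> F \<and> set vs \<subseteq> W \<and> distinct vs \<and>
     (\<forall>i<length vs. fs ! i \<in> bd (vs ! i) \<and> fs ! Suc i \<in> bd (vs ! i))"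

definition calF :: "('x, 'e, 'f, 'v) complex3 \<Rightarrow> 'f set" where
  "calF G = {f \<in> faces G. card (iota_f G f) = 1}"

definition face_equiv :: "('x, 'e, 'f, 'v) complex3 \<Rightarrow> 'f \<Rightarrow> 'f \<Rightarrow> bool" where
  "face_equiv G f f' \<longleftrightarrow> f \<in> calF G \<and> f' \<in> calF G \<and>
     (f = f' \<or> (\<exists>fs vs. face_path (vols G) (bdv G) (faces G) fs vs \<and> hd fs = f \<and> last fs = f' \<and>
                      ({}, zprod_supp fs) \<in> stab_group G))"

definition face_classes :: "('x, 'e, 'f, 'v) complex3 \<Rightarrow> 'f set set" where
  "face_classes G = {{g \<in> calF G. face_equiv G f g} | f. f \<in> calF G}"

definition aug_vols :: "('x, 'e, 'f, 'v) complex3 \<Rightarrow> ('v + 'f set) set" where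
  "aug_vols G = Inl ` vols G \<union> Inr ` face_classes G"

definition aug_bd :: "('x, 'e, 'f, 'v) complex3 \<Rightarrow> ('v + 'f set) \<Rightarrow> 'f set" where
  "aug_bd G w = (case w of Inl v \<Rightarrow> bdv G v | Inr C \<Rightarrow> C)"

definition is_cut_set :: "('x, 'e, 'f, 'v) complex3 \<Rightarrow> 'f set \<Rightarrow> bool" where
  "is_cut_set G K \<longleftrightarrow>
     (\<exists>\<nu>\<in>aug_vols G. \<exists>\<nu>'\<in>aug_vols G. \<forall>fs vs.
        face_path (aug_vols G) (aug_bd G) (faces G) fs vs \<and>
        hd fs \<in> aug_bd G \<nu> \<and> last fs \<in> aug_bd G \<nu>' \<and> \<nu> \<notin> set vs \<and> \<nu>' \<notin> set vs
        \<longrightarrow> set fs \<inter> K \<noteq> {})"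

text \<open>Rendered homologically: every set of faces with empty boundary (i.e. every X-type
  operator commuting with all B_e) is the boundary of a set of volumes of the augmented
  lattice.\<close>
definition L1 :: "('x, 'e, 'f, 'v) complex3 \<Rightarrow> bool" where
  "L1 G \<longleftrightarrow> (\<forall>D \<subseteq> faces G. bd_faces G D = {} \<longrightarrow>
     (\<exists>W \<subseteq> aug_vols G. D = {f \<in> faces G. odd (card {w \<in> W. f \<in> aug_bd G w})}))"

text \<open>Processing one face within a round: state (current \<E>, B').\<close>
definition p1_process :: "('x, 'e, 'f, 'v) complex3 \<Rightarrow> ('f set \<times> 'e set) \<Rightarrow> 'f \<Rightarrow> ('f set \<times> 'e set)" where
  "p1_process G st f =
     (if \<not> is_cut_set G (fst st \<union> {f}) then (fst st \<union> {f}, snd st \<union> bdf G f) else st)"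

text \<open>One round, from state (\<E>, B, explored) (only performed while not all faces are explored);
  the faces of the round are processed in an arbitrary order.\<close>
inductive p1_round :: "('x, 'e, 'f, 'v) complex3 \<Rightarrow> ('f set \<times> 'e set \<times> 'f set) \<Rightarrow>
    ('f set \<times> 'e set \<times> 'f set) \<Rightarrow> bool" for G where
  "Xp \<noteq> faces G \<Longrightarrow> R = {f \<in> faces G - Xp. bdf G f \<inter> B \<noteq> {}} \<Longrightarrow>
   distinct fl \<Longrightarrow> set fl = R \<Longrightarrow> foldl (p1_process G) (Ec, {}) fl = (Ec', B') \<Longrightarrow>
   p1_round G (Ec, B, Xp) (Ec', B' - B, Xp \<union> R)"

definition p1_returns :: "('x, 'e, 'f, 'v) complex3 \<Rightarrow> 'e set \<Rightarrow> 'f set \<Rightarrow> bool" where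
  "p1_returns G SE Ec \<longleftrightarrow> (\<exists>B. (p1_round G)\<^sup>*\<^sup>* ({}, SE, {}) (Ec, B, faces G))"

end

theory Submission
  imports Defs
begin

lemma card_symdiff_parity:
  assumes "finite A" "finite B"
  shows "even (card (symdiff A B)) \<longleftrightarrow> (even (card A) \<longleftrightarrow> even (card B))"
proof -
  have d: "symdiff A B = (A - B) \<union> (B - A)" by (simp add: symdiff_def)
  have c1: "card (symdiff A B) = card (A - B) + card (B - A)"
    unfolding d by (rule card_Un_disjoint) (use assms in auto)
  have c2: "card (A - B) = card A - card (A \<inter> B)"
    by (metis Diff_Int2 Diff_Int_distrib2 assms(1) card_Diff_subset_Int finite_Int inf.idem inf_le1)
  have c3: "card (B - A) = card B - card (A \<inter> B)"
    by (metis Int_commute assms(2) card_Diff_subset_Int finite_Int)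
  have "card (A \<inter> B) \<le> card A" by (simp add: assms card_mono)
  moreover have "card (A \<inter> B) \<le> card B" by (simp add: assms card_mono)
  ultimately show ?thesis using c1 c2 c3 by auto
qed

lemma symdiff_Int: "z \<inter> symdiff A B = symdiff (z \<inter> A) (z \<inter> B)"
  by (auto simp: symdiff_def)

lemma symdiff_finite: "finite A \<Longrightarrow> finite B \<Longrightarrow> finite (symdiff A B)"
  by (simp add: symdiff_def)

lemma symdiff_sub: "A \<subseteq> C \<Longrightarrow> B \<subseteq> C \<Longrightarrow> symdiff A B \<subseteq> C"
  by (auto simp: symdiff_def)

lemma symdiff_empty[simp]: "symdiff {} A = A" "symdiff A {} = A" "symdiff A A = {}"
  by (auto simp: symdiff_def)

lemma symdiff_comm: "symdiff A B = symdiff B A"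
  by (auto simp: symdiff_def)

lemma symdiff_assoc: "symdiff (symdiff A B) C = symdiff A (symdiff B C)"
  by (auto simp: symdiff_def)

lemma symdiff_eq_empty: "symdiff A B = {} \<longleftrightarrow> A = B"
  by (auto simp: symdiff_def)

lemma even_Int_symdiff:
  assumes "finite z" "even (card (z \<inter> A))" "even (card (z \<inter> B))"
  shows "even (card (z \<inter> symdiff A B))"
  using card_symdiff_parity[of "z \<inter> A" "z \<inter> B"] assms by (simp add: symdiff_Int)

definition xs_sum :: "('w \<Rightarrow> 'a set) \<Rightarrow> 'w set \<Rightarrow> 'a set" where
  "xs_sum g W = {h. odd (card {w\<in>W. h \<in> g w})}"

lemma xs_sum_empty[simp]: "xs_sum g {} = {}"
  by (simp add: xs_sum_def)

lemma xs_sum_insert: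
  assumes "finite W" "w \<notin> W"
  shows "xs_sum g (insert w W) = symdiff (g w) (xs_sum g W)"
proof -
  { fix h
    have "{v\<in>insert w W. h \<in> g v} = (if h \<in> g w then insert w {v\<in>W. h \<in> g v} else {v\<in>W. h \<in> g v})"
      by auto
    moreover have "card (insert w {v\<in>W. h \<in> g v}) = Suc (card {v\<in>W. h \<in> g v})"
      using assms by simp
    ultimately have "odd (card {v\<in>insert w W. h \<in> g v}) \<longleftrightarrow> (h \<in> g w \<longleftrightarrow> \<not> odd (card {v\<in>W. h \<in> g v}))"
      by auto }
  then show ?thesis by (auto simp: xs_sum_def symdiff_def)
qed

lemma xs_sum_even:
  assumes "finite W" "finite z" "\<And>w. w \<in> W \<Longrightarrow> even (card (z \<inter> g w))"
  shows "even (card (z \<inter> xs_sum g W))"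
  using assms
proof (induction W rule: finite_induct)
  case empty then show ?case by simp
next
  case (insert w W)
  then show ?case by (simp add: xs_sum_insert even_Int_symdiff)
qed

lemma xs_sum_union:
  assumes "finite A" "finite B" "A \<inter> B = {}"
  shows "xs_sum g (A \<union> B) = symdiff (xs_sum g A) (xs_sum g B)"
  using assms
proof (induction A rule: finite_induct)
  case empty then show ?case by simp
next
  case (insert w A)
  then have "w \<notin> A \<union> B" by auto
  then show ?case using insert by (simp add: xs_sum_insert symdiff_assoc)
qed

lemma xs_sum_sub: "(\<And>w. w \<in> W \<Longrightarrow> g w \<subseteq> C) \<Longrightarrow> xs_sum g W \<subseteq> C"
  unfolding xs_sum_def
proof
  fix x assume a: "(\<And>w. w \<in> W \<Longrightarrow> g w \<subseteq> C)" and "x \<in> {h. odd (card {w \<in> W. h \<in> g w})}"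
  then have "{w \<in> W. x \<in> g w} \<noteq> {}" by (metis (no_types, lifting) card.empty even_zero mem_Collect_eq)
  then show "x \<in> C" using a by blast
qed

definition closed_fs :: "('x, 'e, 'f, 'v) complex3 \<Rightarrow> 'f set \<Rightarrow> bool" where
  "closed_fs G S \<longleftrightarrow> (\<forall>e\<in>edges G. even (card (iota_e G e \<inter> S)))"

lemma bd_faces_alt:
  "S \<subseteq> faces G \<Longrightarrow> bd_faces G S = {e \<in> edges G. odd (card (iota_e G e \<inter> S))}"
proof -
  assume "S \<subseteq> faces G"
  then have "\<And>e. {f \<in> S. e \<in> bdf G f} = iota_e G e \<inter> S" by (auto simp: iota_e_def)
  then show ?thesis by (simp add: bd_faces_def)
qed

lemma bd_faces_empty_iff:
  "S \<subseteq> faces G \<Longrightarrow> bd_faces G S = {} \<longleftrightarrow> closed_fs G S"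
  by (auto simp: bd_faces_alt closed_fs_def)

lemma bd_faces_symdiff:
  assumes "finite S" "finite T"
  shows "bd_faces G (symdiff S T) = symdiff (bd_faces G S) (bd_faces G T)"
proof -
  { fix e
    have "{f \<in> symdiff S T. e \<in> bdf G f} = symdiff {f\<in>S. e \<in> bdf G f} {f\<in>T. e \<in> bdf G f}"
      by (auto simp: symdiff_def)
    then have "odd (card {f \<in> symdiff S T. e \<in> bdf G f}) \<longleftrightarrow>
       (odd (card {f\<in>S. e \<in> bdf G f}) \<longleftrightarrow> \<not> odd (card {f\<in>T. e \<in> bdf G f}))"
      using card_symdiff_parity[of "{f\<in>S. e \<in> bdf G f}" "{f\<in>T. e \<in> bdf G f}"] assms by auto }
  then show ?thesis by (auto simp: bd_faces_def symdiff_def)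
qed

lemma closed_fs_symdiff:
  assumes "finite (faces G)" "closed_fs G A" "closed_fs G B"
  shows "closed_fs G (symdiff A B)"
  unfolding closed_fs_def
proof
  fix e assume "e \<in> edges G"
  have "finite (iota_e G e)" using assms(1) by (simp add: iota_e_def)
  then show "even (card (iota_e G e \<inter> symdiff A B))"
    using even_Int_symdiff[of "iota_e G e" A B] assms \<open>e \<in> edges G\<close> by (auto simp: closed_fs_def)
qed

lemma closed_fs_xs_sum:
  assumes "finite (faces G)" "finite W" "\<And>w. w \<in> W \<Longrightarrow> closed_fs G (g w)"
  shows "closed_fs G (xs_sum g W)"
  unfolding closed_fs_def
proof
  fix e assume "e \<in> edges G"
  have "finite (iota_e G e)" using assms(1) by (simp add: iota_e_def)
  then show "even (card (iota_e G e \<inter> xs_sum g W))"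
    using xs_sum_even[of W "iota_e G e" g] assms \<open>e \<in> edges G\<close> by (auto simp: closed_fs_def)
qed

lemma closed_fs_Int_faces:
  "closed_fs G S \<Longrightarrow> closed_fs G (faces G \<inter> S)"
proof -
  have "\<And>e. iota_e G e \<inter> (faces G \<inter> S) = iota_e G e \<inter> S" by (auto simp: iota_e_def)
  then show "closed_fs G S \<Longrightarrow> closed_fs G (faces G \<inter> S)" by (simp add: closed_fs_def)
qed

lemma card_set_filter_idx:
  assumes "distinct es"
  shows "card {f \<in> set es. P f} = card {i. i < length es \<and> P (es ! i)}"
proof -
  have "{f \<in> set es. P f} = set (filter P es)" by auto
  moreover have "card (set (filter P es)) = length (filter P es)"
    by (rule distinct_card) (simp add: assms)
  ultimately have "card {f \<in> set es. P f} = length (filter P es)" by simp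
  then show ?thesis by (simp add: length_filter_conv_card)
qed

lemma closed_idx_count:
  assumes n: "length xs = n" "n \<ge> 2" and d: "distinct xs"
  shows "card {i. i < n \<and> (xs ! i = v \<or> xs ! (Suc i mod n) = v)} = 0 \<or>
         card {i. i < n \<and> (xs ! i = v \<or> xs ! (Suc i mod n) = v)} = 2"
proof (cases "v \<in> set xs")
  case False
  then have "{i. i < n \<and> (xs ! i = v \<or> xs ! (Suc i mod n) = v)} = {}"
    using n by (auto simp: in_set_conv_nth)
  then show ?thesis by simp
next
  case True
  then obtain j where j: "j < n" "xs ! j = v" using n by (auto simp: in_set_conv_nth)
  define k where "k = (if j = 0 then n - 1 else j - 1)"
  have "{i. i < n \<and> (xs ! i = v \<or> xs ! (Suc i mod n) = v)} = {j, k}"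
  proof (intro set_eqI iffI)
    fix i assume "i \<in> {i. i < n \<and> (xs ! i = v \<or> xs ! (Suc i mod n) = v)}"
    then have i: "i < n" "xs ! i = v \<or> xs ! (Suc i mod n) = v" by auto
    have sm: "Suc i mod n < n" using n by simp
    from i(2) show "i \<in> {j, k}"
    proof
      assume "xs ! i = v"
      then have "i = j" using d j i(1) n by (metis nth_eq_iff_index_eq)
      then show ?thesis by simp
    next
      assume "xs ! (Suc i mod n) = v"
      then have "Suc i mod n = j" using d j sm n by (metis nth_eq_iff_index_eq)
      then have "i = k" using i(1) n unfolding k_def
        by (cases "Suc i < n") (auto simp: mod_if)
      then show ?thesis by simp
    qed
  next
    fix i assume "i \<in> {j, k}"
    then show "i \<in> {i. i < n \<and> (xs ! i = v \<or> xs ! (Suc i mod n) = v)}"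
    proof
      assume "i = j" then show ?thesis using j by simp
    next
      assume "i \<in> {k}"
      then have "i = k" by simp
      then have "i < n" "Suc i mod n = j" using j n unfolding k_def by (auto simp: mod_if)
      then show ?thesis using j by simp
    qed
  qed
  moreover have "j \<noteq> k" using j n unfolding k_def by auto
  ultimately show ?thesis by simp
qed

lemma open_idx_count:
  assumes n: "Suc (length xs) = n" "n \<ge> 2" and d: "distinct xs"
  shows "card {i. i < n \<and> ((i < n - 1 \<and> xs ! i = v) \<or> (0 < i \<and> xs ! (i - 1) = v))} = 0 \<or>
         card {i. i < n \<and> ((i < n - 1 \<and> xs ! i = v) \<or> (0 < i \<and> xs ! (i - 1) = v))} = 2"
proof (cases "v \<in> set xs")
  case False
  then have "{i. i < n \<and> ((i < n - 1 \<and> xs ! i = v) \<or> (0 < i \<and> xs ! (i - 1) = v))} = {}"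
    using n by (auto simp: in_set_conv_nth)
  then show ?thesis by simp
next
  case True
  then obtain j where j: "j < n - 1" "xs ! j = v" using n by (auto simp: in_set_conv_nth)
  have "{i. i < n \<and> ((i < n - 1 \<and> xs ! i = v) \<or> (0 < i \<and> xs ! (i - 1) = v))} = {j, Suc j}"
  proof (intro set_eqI iffI)
    fix i assume "i \<in> {i. i < n \<and> ((i < n - 1 \<and> xs ! i = v) \<or> (0 < i \<and> xs ! (i - 1) = v))}"
    then have i: "i < n" "(i < n - 1 \<and> xs ! i = v) \<or> (0 < i \<and> xs ! (i - 1) = v)" by auto
    from i(2) show "i \<in> {j, Suc j}"
    proof
      assume a: "i < n - 1 \<and> xs ! i = v"
      have "i < length xs" "j < length xs" using a j n by auto
      then have "i = j" using a j nth_eq_iff_index_eq[OF d] by metis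
      then show ?thesis by simp
    next
      assume a: "0 < i \<and> xs ! (i - 1) = v"
      have "i - 1 < length xs" "j < length xs" using a j n i(1) by auto
      then have "i - 1 = j" using a j nth_eq_iff_index_eq[OF d] by metis
      then show ?thesis using a by auto
    qed
  next
    fix i assume "i \<in> {j, Suc j}"
    then show "i \<in> {i. i < n \<and> ((i < n - 1 \<and> xs ! i = v) \<or> (0 < i \<and> xs ! (i - 1) = v))}"
      using j by auto
  qed
  then show ?thesis by simp
qed

lemma open_card1_count:
  assumes n: "(n::nat) \<ge> 2" and "\<And>i. i < n \<Longrightarrow> (card (E i) = 1 \<longleftrightarrow> i = 0 \<or> i = n - 1)"
  shows "card {i. i < n \<and> card (E i) = 1} = 2"
proof -
  have "{i. i < n \<and> card (E i) = 1} = {0, n - 1}" using assms by auto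
  then show ?thesis using n by simp
qed

locale lat =
  fixes G :: "('x, 'e, 'f, 'v) complex3"
  assumes cc: "cell_complex3 G" and l2: "L2 G" and two: "at_most_two_vols G"
    and l1: "L1 G" and dconn: "dual_connected G"
begin

lemma fin_faces: "finite (faces G)" and fin_vols: "finite (vols G)" and fin_edges: "finite (edges G)"
  using cc by (auto simp: cell_complex3_def)

lemma iota_e_sub: "iota_e G e \<subseteq> faces G"
  by (auto simp: iota_e_def)

lemma iota_e_finite: "finite (iota_e G e)"
  using fin_faces finite_subset iota_e_sub by blast

lemma dual_path:
  assumes "e \<in> edges G"
  obtains es where "set es = iota_e G e" "distinct es" "length es \<ge> 2"
    "(\<exists>xs. length xs = length es \<and> distinct xs \<and>
        (\<forall>i<length es. iota_f G (es ! i) = {xs ! i, xs ! (Suc i mod length es)}))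
   \<or> (\<exists>xs. Suc (length xs) = length es \<and> distinct xs \<and>
        (\<forall>i<length es. \<forall>v. v \<in> iota_f G (es ! i) \<longleftrightarrow>
              ((i < length es - 1 \<and> xs ! i = v) \<or> (0 < i \<and> xs ! (i - 1) = v))) \<and>
        (\<forall>i<length es. card (iota_f G (es ! i)) = 1 \<longleftrightarrow> i = 0 \<or> i = length es - 1))"
proof -
  from l2 assms obtain es where es: "set es = iota_e G e"
    "is_closed_path (iota_f G) es \<or> is_open_partial_path (iota_f G) es"
    by (auto simp: L2_def boundary_is_path_def)
  show ?thesis
  proof (cases "is_closed_path (iota_f G) es")
    case True
    then show ?thesis using es that by (auto simp: is_closed_path_def)
  next
    case False
    then have op: "is_open_partial_path (iota_f G) es" using es by auto
    then obtain xs where xs: "length es \<ge> 2" "distinct es" "Suc (length xs) = length es" "distinct xs"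
        "iota_f G (es ! 0) = {xs ! 0}" "iota_f G (last es) = {last xs}"
        "\<And>i. 0 < i \<and> Suc i < length es \<Longrightarrow> iota_f G (es ! i) = {xs ! (i - 1), xs ! i}"
      unfolding is_open_partial_path_def by blast
    define n where "n = length es"
    have "es \<noteq> []" using xs(1) by auto
    then have lastes: "last es = es ! (n - 1)" using n_def by (simp add: last_conv_nth)
    have "xs \<noteq> []" using xs(1,3) by auto
    moreover have "length xs - 1 = n - 2" using xs(3) n_def by simp
    ultimately have lastxs: "last xs = xs ! (n - 2)"
      by (simp add: last_conv_nth)
    have ep: "\<And>i. i < n \<Longrightarrow> iota_f G (es ! i) =
        (if i = 0 then {xs ! 0} else if i = n - 1 then {xs ! (n - 2)} else {xs ! (i - 1), xs ! i})"
    proof -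
      fix i assume "i < n"
      show "iota_f G (es ! i) =
        (if i = 0 then {xs ! 0} else if i = n - 1 then {xs ! (n - 2)} else {xs ! (i - 1), xs ! i})"
        using xs(5) xs(6) xs(7)[of i] lastes lastxs \<open>i < n\<close> n_def by auto
    qed
    have A: "\<forall>i<length es. \<forall>v. v \<in> iota_f G (es ! i) \<longleftrightarrow>
              ((i < length es - 1 \<and> xs ! i = v) \<or> (0 < i \<and> xs ! (i - 1) = v))"
    proof (intro allI impI)
      fix i v assume i: "i < length es"
      show "v \<in> iota_f G (es ! i) \<longleftrightarrow> ((i < length es - 1 \<and> xs ! i = v) \<or> (0 < i \<and> xs ! (i - 1) = v))"
        using ep[of i] i xs(1) n_def
        by (cases "i = 0"; cases "i = n - 1") (auto simp: numeral_2_eq_2)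
    qed
    have B: "\<forall>i<length es. card (iota_f G (es ! i)) = 1 \<longleftrightarrow> i = 0 \<or> i = length es - 1"
    proof (intro allI impI)
      fix i assume i: "i < length es"
      show "card (iota_f G (es ! i)) = 1 \<longleftrightarrow> i = 0 \<or> i = length es - 1"
      proof (cases "i = 0 \<or> i = n - 1")
        case True then show ?thesis using ep[of i] i n_def by auto
      next
        case False
        then have "i - 1 < length xs" "i < length xs" "i - 1 \<noteq> i" using xs(3) i n_def by auto
        then have "xs ! (i - 1) \<noteq> xs ! i" using nth_eq_iff_index_eq[OF xs(4)] by metis
        then show ?thesis using ep[of i] i n_def False by auto
      qed
    qed
    show ?thesis using that[OF es(1) xs(2) xs(1)] xs(3,4) A B by blast
  qed
qed

lemma vol_edge_even:
  assumes "e \<in> edges G" "v \<in> vols G"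
  shows "even (card (iota_e G e \<inter> bdv G v))"
proof -
  obtain es where es: "set es = iota_e G e" "distinct es" "length es \<ge> 2"
    "(\<exists>xs. length xs = length es \<and> distinct xs \<and>
        (\<forall>i<length es. iota_f G (es ! i) = {xs ! i, xs ! (Suc i mod length es)}))
   \<or> (\<exists>xs. Suc (length xs) = length es \<and> distinct xs \<and>
        (\<forall>i<length es. \<forall>v. v \<in> iota_f G (es ! i) \<longleftrightarrow>
              ((i < length es - 1 \<and> xs ! i = v) \<or> (0 < i \<and> xs ! (i - 1) = v))) \<and>
        (\<forall>i<length es. card (iota_f G (es ! i)) = 1 \<longleftrightarrow> i = 0 \<or> i = length es - 1))"
    by (rule dual_path[OF assms(1)])
  have "iota_e G e \<inter> bdv G v = {f \<in> set es. v \<in> iota_f G f}"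
    using es(1) assms(2) iota_e_sub by (auto simp: iota_f_def)
  then have c: "card (iota_e G e \<inter> bdv G v) = card {i. i < length es \<and> v \<in> iota_f G (es ! i)}"
    using card_set_filter_idx[OF es(2)] by simp
  from es(4) show ?thesis
  proof
    assume "\<exists>xs. length xs = length es \<and> distinct xs \<and>
        (\<forall>i<length es. iota_f G (es ! i) = {xs ! i, xs ! (Suc i mod length es)})"
    then obtain xs where xs: "length xs = length es" "distinct xs"
        "\<forall>i<length es. iota_f G (es ! i) = {xs ! i, xs ! (Suc i mod length es)}" by blast
    have "{i. i < length es \<and> v \<in> iota_f G (es ! i)} =
          {i. i < length es \<and> (xs ! i = v \<or> xs ! (Suc i mod length es) = v)}"
    proof (rule Collect_cong)
      fix i
      show "(i < length es \<and> v \<in> iota_f G (es ! i)) =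
            (i < length es \<and> (xs ! i = v \<or> xs ! (Suc i mod length es) = v))"
        using xs(3) by auto
    qed
    then have "card (iota_e G e \<inter> bdv G v) = 0 \<or> card (iota_e G e \<inter> bdv G v) = 2"
      using c closed_idx_count[OF xs(1) es(3) xs(2), of v] by simp
    then show ?thesis by (metis even_zero even_numeral)
  next
    assume "\<exists>xs. Suc (length xs) = length es \<and> distinct xs \<and>
        (\<forall>i<length es. \<forall>v. v \<in> iota_f G (es ! i) \<longleftrightarrow>
              ((i < length es - 1 \<and> xs ! i = v) \<or> (0 < i \<and> xs ! (i - 1) = v))) \<and>
        (\<forall>i<length es. card (iota_f G (es ! i)) = 1 \<longleftrightarrow> i = 0 \<or> i = length es - 1)"
    then obtain xs where xs: "Suc (length xs) = length es" "distinct xs"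
        "\<forall>i<length es. \<forall>v. v \<in> iota_f G (es ! i) \<longleftrightarrow>
              ((i < length es - 1 \<and> xs ! i = v) \<or> (0 < i \<and> xs ! (i - 1) = v))" by blast
    have "{i. i < length es \<and> v \<in> iota_f G (es ! i)} =
          {i. i < length es \<and> ((i < length es - 1 \<and> xs ! i = v) \<or> (0 < i \<and> xs ! (i - 1) = v))}"
    proof (rule Collect_cong)
      fix i
      show "(i < length es \<and> v \<in> iota_f G (es ! i)) =
            (i < length es \<and> ((i < length es - 1 \<and> xs ! i = v) \<or> (0 < i \<and> xs ! (i - 1) = v)))"
        using xs(3) by blast
    qed
    then have "card (iota_e G e \<inter> bdv G v) = 0 \<or> card (iota_e G e \<inter> bdv G v) = 2"
      using c open_idx_count[OF xs(1) es(3) xs(2), of v] by simp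
    then show ?thesis by (metis even_zero even_numeral)
  qed
qed

lemma edge_calF_count:
  assumes "e \<in> edges G"
  shows "card (iota_e G e \<inter> calF G) = 0 \<or> card (iota_e G e \<inter> calF G) = 2"
proof -
  obtain es where es: "set es = iota_e G e" "distinct es" "length es \<ge> 2"
    "(\<exists>xs. length xs = length es \<and> distinct xs \<and>
        (\<forall>i<length es. iota_f G (es ! i) = {xs ! i, xs ! (Suc i mod length es)}))
   \<or> (\<exists>xs. Suc (length xs) = length es \<and> distinct xs \<and>
        (\<forall>i<length es. \<forall>v. v \<in> iota_f G (es ! i) \<longleftrightarrow>
              ((i < length es - 1 \<and> xs ! i = v) \<or> (0 < i \<and> xs ! (i - 1) = v))) \<and>
        (\<forall>i<length es. card (iota_f G (es ! i)) = 1 \<longleftrightarrow> i = 0 \<or> i = length es - 1))"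
    by (rule dual_path[OF assms(1)])
  have "iota_e G e \<inter> calF G = {f \<in> set es. card (iota_f G f) = 1}"
    using es(1) iota_e_sub by (auto simp: calF_def)
  then have c: "card (iota_e G e \<inter> calF G) = card {i. i < length es \<and> card (iota_f G (es ! i)) = 1}"
    using card_set_filter_idx[OF es(2)] by simp
  from es(4) show ?thesis
  proof
    assume "\<exists>xs. length xs = length es \<and> distinct xs \<and>
        (\<forall>i<length es. iota_f G (es ! i) = {xs ! i, xs ! (Suc i mod length es)})"
    then obtain xs where xs: "length xs = length es" "distinct xs"
        "\<forall>i<length es. iota_f G (es ! i) = {xs ! i, xs ! (Suc i mod length es)}" by blast
    have "\<And>i. i < length es \<Longrightarrow> card (iota_f G (es ! i)) = 2"
    proof -
      fix i assume i: "i < length es"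
      have "i \<noteq> Suc i mod length es" using es(3) i by (cases "Suc i < length es") (auto simp: mod_if)
      moreover have "Suc i mod length es < length xs" "i < length xs" using xs(1) i by (auto intro: mod_less_divisor)
      ultimately have "xs ! i \<noteq> xs ! (Suc i mod length es)" using nth_eq_iff_index_eq[OF xs(2)] by metis
      then show "card (iota_f G (es ! i)) = 2" using xs(3) i by simp
    qed
    then have "{i. i < length es \<and> card (iota_f G (es ! i)) = 1} = {}" by force
    then show ?thesis using c by simp
  next
    assume "\<exists>xs. Suc (length xs) = length es \<and> distinct xs \<and>
        (\<forall>i<length es. \<forall>v. v \<in> iota_f G (es ! i) \<longleftrightarrow>
              ((i < length es - 1 \<and> xs ! i = v) \<or> (0 < i \<and> xs ! (i - 1) = v))) \<and>
        (\<forall>i<length es. card (iota_f G (es ! i)) = 1 \<longleftrightarrow> i = 0 \<or> i = length es - 1)"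
    then have "\<forall>i<length es. card (iota_f G (es ! i)) = 1 \<longleftrightarrow> i = 0 \<or> i = length es - 1" by blast
    then show ?thesis using c open_card1_count[OF es(3), of "\<lambda>i. iota_f G (es ! i)"] by auto
  qed
qed

lemma bdv_closed: "v \<in> vols G \<Longrightarrow> closed_fs G (bdv G v)"
  using vol_edge_even by (auto simp: closed_fs_def)

lemma calF_closed: "closed_fs G (calF G)"
  using edge_calF_count by (fastforce simp: closed_fs_def)

end

inductive_set xspan :: "'a set set \<Rightarrow> 'a set set" for R where
  xspan_empty: "{} \<in> xspan R"
| xspan_step: "r \<in> R \<Longrightarrow> x \<in> xspan R \<Longrightarrow> symdiff r x \<in> xspan R"

lemma xspan_symdiff: "x \<in> xspan R \<Longrightarrow> y \<in> xspan R \<Longrightarrow> symdiff x y \<in> xspan R"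
proof (induction x rule: xspan.induct)
  case xspan_empty then show ?case by simp
next
  case (xspan_step r x)
  then show ?case by (simp add: symdiff_assoc xspan.xspan_step)
qed

lemma xspan_gen: "r \<in> R \<Longrightarrow> r \<in> xspan R"
  using xspan_step[OF _ xspan_empty] by fastforce

lemma xspan_sub: "x \<in> xspan R' \<Longrightarrow> R' \<subseteq> xspan R \<Longrightarrow> x \<in> xspan R"
proof (induction x rule: xspan.induct)
  case xspan_empty then show ?case by (simp add: xspan.xspan_empty)
next
  case (xspan_step r x)
  then show ?case using xspan_symdiff by blast
qed

lemma xspan_even:
  assumes "x \<in> xspan R" "finite D" "\<And>r. r \<in> R \<Longrightarrow> even (card (D \<inter> r))"
  shows "even (card (D \<inter> x))"
  using assms
proof (induction x rule: xspan.induct)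
  case xspan_empty then show ?case by simp
next
  case (xspan_step r x)
  then show ?case using even_Int_symdiff by blast
qed

lemma perp_in_xspan:
  assumes "finite F"
  shows "(\<And>r. r \<in> R \<Longrightarrow> r \<subseteq> F) \<Longrightarrow> z \<subseteq> F \<Longrightarrow>
     (\<And>D. D \<subseteq> F \<Longrightarrow> (\<forall>r\<in>R. even (card (D \<inter> r))) \<Longrightarrow> even (card (D \<inter> z))) \<Longrightarrow>
     z \<in> xspan R"
  using assms
proof (induction F arbitrary: R z rule: finite_induct)
  case empty
  then have "z = {}" by auto
  then show ?case by (simp add: xspan_empty)
next
  case (insert a F)
  show ?case
  proof (cases "\<exists>r0\<in>R. a \<in> r0")
    case False
    have "even (card ({a} \<inter> z))"
      using insert.prems(3)[of "{a}"] False by auto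
    then have "a \<notin> z" by (cases "a \<in> z") auto
    then have zF: "z \<subseteq> F" using insert.prems(2) by auto
    have RF: "\<And>r. r \<in> R \<Longrightarrow> r \<subseteq> F" using False insert.prems(1) by blast
    show ?thesis
      by (rule insert.IH[OF RF zF]) (use insert.prems(3) in auto)
  next
    case True
    then obtain r0 where r0: "r0 \<in> R" "a \<in> r0" by blast
    define md where "md r = (if a \<in> r then symdiff r r0 else r)" for r
    define R' where "R' = md ` R"
    define z' where "z' = md z"
    have finF': "finite (insert a F)" using insert.hyps by simp
    have r0F: "r0 \<subseteq> insert a F" using insert.prems(1) r0 by blast
    have R'F: "\<And>r. r \<in> R' \<Longrightarrow> r \<subseteq> F"
    proof -
      fix r assume "r \<in> R'"
      then obtain s where s: "s \<in> R" "r = md s" unfolding R'_def by blast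
      have "s \<subseteq> insert a F" using insert.prems(1) s by blast
      then show "r \<subseteq> F" using s r0F r0(2) unfolding md_def by (auto simp: symdiff_def)
    qed
    have z'F: "z' \<subseteq> F" using insert.prems(2) r0F r0(2) unfolding z'_def md_def
      by (auto simp: symdiff_def)
    have "z' \<in> xspan R'"
    proof (rule insert.IH[OF R'F z'F])
      fix D assume DF: "D \<subseteq> F" and ev: "\<forall>r\<in>R'. even (card (D \<inter> r))"
      define D' where "D' = (if odd (card (D \<inter> r0)) then insert a D else D)"
      have finD': "finite D'" using DF insert.hyps unfolding D'_def by (auto intro: finite_subset)
      have aD: "a \<notin> D" using DF insert.hyps by auto
      have Dr0: "even (card (D' \<inter> r0))"
      proof (cases "odd (card (D \<inter> r0))")
        case True
        then have "D' \<inter> r0 = insert a (D \<inter> r0)" using r0 unfolding D'_def by auto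
        moreover have "finite (D \<inter> r0)" using DF insert.hyps by (auto intro: finite_subset)
        ultimately show ?thesis using True aD by simp
      next
        case False then show ?thesis unfolding D'_def by simp
      qed
      have sameD: "\<And>r. a \<notin> r \<Longrightarrow> D' \<inter> r = D \<inter> r" unfolding D'_def by auto
      have allR: "\<forall>r\<in>R. even (card (D' \<inter> r))"
      proof
        fix r assume r: "r \<in> R"
        show "even (card (D' \<inter> r))"
        proof (cases "a \<in> r")
          case False
          then have "md r = r" unfolding md_def by simp
          then have "even (card (D \<inter> r))" using ev r unfolding R'_def by force
          then show ?thesis using sameD[OF False] by simp
        next
          case True
          have mr: "md r = symdiff r r0" using True unfolding md_def by simp
          have "a \<notin> md r" using mr True r0 by (auto simp: symdiff_def)
          moreover have "even (card (D \<inter> md r))" using ev r unfolding R'_def by blast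
          ultimately have e1: "even (card (D' \<inter> md r))" using sameD by simp
          have "r = symdiff (md r) r0" using mr by (auto simp: symdiff_def)
          then show ?thesis using even_Int_symdiff[OF finD' e1 Dr0] by simp
        qed
      qed
      have "D' \<subseteq> insert a F" using DF unfolding D'_def by auto
      then have ez: "even (card (D' \<inter> z))" using insert.prems(3) allR by blast
      have "a \<notin> z'" using r0 unfolding z'_def md_def by (auto simp: symdiff_def)
      then have "D \<inter> z' = D' \<inter> z'" unfolding D'_def by auto
      moreover have "even (card (D' \<inter> z'))"
      proof (cases "a \<in> z")
        case True
        then have "z' = symdiff z r0" unfolding z'_def md_def by simp
        then show ?thesis using even_Int_symdiff[OF finD' ez Dr0] by simp
      next
        case False
        then show ?thesis using ez unfolding z'_def md_def by simp
      qed
      ultimately show "even (card (D \<inter> z'))" by simp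
    qed
    moreover have "R' \<subseteq> xspan R"
    proof
      fix r assume "r \<in> R'"
      then obtain s where s: "s \<in> R" "r = md s" unfolding R'_def by blast
      then show "r \<in> xspan R" unfolding md_def
        using xspan_gen[OF s(1)] xspan_gen[OF r0(1)] xspan_symdiff by auto
    qed
    ultimately have z'R: "z' \<in> xspan R" using xspan_sub by blast
    show ?thesis
    proof (cases "a \<in> z")
      case True
      then have "z = symdiff z' r0" unfolding z'_def md_def by (auto simp: symdiff_def)
      then show ?thesis using xspan_symdiff[OF z'R xspan_gen[OF r0(1)]] by simp
    next
      case False
      then show ?thesis using z'R unfolding z'_def md_def by simp
    qed
  qed
qed


lemma walk_distinct:
  assumes "r\<^sup>*\<^sup>* x y"
  shows "\<exists>us. us \<noteq> [] \<and> hd us = x \<and> last us = y \<and> distinct us \<and>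
           (\<forall>i. Suc i < length us \<longrightarrow> r (us ! i) (us ! Suc i))"
  using assms
proof (induction rule: rtranclp_induct)
  case base
  then show ?case by (rule exI[of _ "[x]"]) simp
next
  case (step y z)
  then obtain us where us: "us \<noteq> []" "hd us = x" "last us = y" "distinct us"
    "\<forall>i. Suc i < length us \<longrightarrow> r (us ! i) (us ! Suc i)" by blast
  show ?case
  proof (cases "z \<in> set us")
    case True
    then obtain j where j: "j < length us" "us ! j = z" by (auto simp: in_set_conv_nth)
    let ?vs = "take (Suc j) us"
    have "?vs \<noteq> []" using us(1) by simp
    moreover have "hd ?vs = x" using us(1,2) by (simp add: hd_take)
    moreover have "last ?vs = z" using j by (simp add: take_Suc_conv_app_nth)
    moreover have "distinct ?vs" using us(4) by simp
    moreover have "\<forall>i. Suc i < length ?vs \<longrightarrow> r (?vs ! i) (?vs ! Suc i)"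
    proof (intro allI impI)
      fix i assume "Suc i < length ?vs"
      then have a: "Suc i < length us" "Suc i < Suc j" by auto
      then have "r (us ! i) (us ! Suc i)" using us(5) by blast
      then show "r (?vs ! i) (?vs ! Suc i)" using a by simp
    qed
    ultimately show ?thesis by blast
  next
    case False
    let ?vs = "us @ [z]"
    have "?vs \<noteq> []" by simp
    moreover have "hd ?vs = x" using us(1,2) by simp
    moreover have "last ?vs = z" by simp
    moreover have "distinct ?vs" using us(4) False by simp
    moreover have "\<forall>i. Suc i < length ?vs \<longrightarrow> r (?vs ! i) (?vs ! Suc i)"
    proof (intro allI impI)
      fix i assume i: "Suc i < length ?vs"
      show "r (?vs ! i) (?vs ! Suc i)"
      proof (cases "Suc i < length us")
        case True
        then show ?thesis using us(5) by (simp add: nth_append)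
      next
        case False
        then have "Suc i = length us" using i by simp
        moreover have "us ! i = y" using us(1,3) \<open>Suc i = length us\<close>
          by (metis diff_Suc_1 last_conv_nth)
        ultimately show ?thesis using step.hyps(2) by (simp add: nth_append)
      qed
    qed
    ultimately show ?thesis by blast
  qed
qed

lemma rtranclp_cross:
  assumes "r\<^sup>*\<^sup>* a b" "P a" "\<not> P b"
  shows "\<exists>x y. r x y \<and> P x \<and> \<not> P y"
  using assms
proof (induction rule: rtranclp_induct)
  case base then show ?case by simp
next
  case (step y z)
  then show ?case by (cases "P y") blast+
qed

lemma rtranclp_sym:
  assumes "\<And>a b. r a b \<Longrightarrow> r b a" "r\<^sup>*\<^sup>* x y"
  shows "r\<^sup>*\<^sup>* y x"
  using assms(2)
proof (induction rule: rtranclp_induct)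
  case base then show ?case by simp
next
  case (step y z)
  then show ?case using assms(1) by (meson converse_rtranclp_into_rtranclp)
qed

lemma zprod_supp_sub: "zprod_supp xs \<subseteq> set xs"
  by (induction xs) (auto simp: symdiff_def)

lemma zprod_supp_finite: "finite (zprod_supp xs)"
  by (rule finite_subset[OF zprod_supp_sub]) simp

lemma zprod_parity:
  "even (card (Y \<inter> zprod_supp xs)) \<longleftrightarrow> even (length (filter (\<lambda>x. x \<in> Y) xs))"
proof (induction xs)
  case Nil then show ?case by simp
next
  case (Cons g gs)
  have "Y \<inter> zprod_supp (g # gs) = symdiff (Y \<inter> {g}) (Y \<inter> zprod_supp gs)"
    by (simp add: symdiff_Int)
  moreover have "finite (Y \<inter> zprod_supp gs)" using zprod_supp_finite by blast
  ultimately have *: "even (card (Y \<inter> zprod_supp (g # gs))) \<longleftrightarrow>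
     (even (card (Y \<inter> {g})) \<longleftrightarrow> even (card (Y \<inter> zprod_supp gs)))"
    using card_symdiff_parity[of "Y \<inter> {g}" "Y \<inter> zprod_supp gs"] by simp
  show ?case
  proof (cases "g \<in> Y")
    case True
    then have "card (Y \<inter> {g}) = 1" by simp
    moreover have "length (filter (\<lambda>x. x \<in> Y) (g # gs)) = Suc (length (filter (\<lambda>x. x \<in> Y) gs))"
      using True by simp
    ultimately show ?thesis using Cons.IH * by simp
  next
    case False
    then have "card (Y \<inter> {g}) = 0" by simp
    moreover have "length (filter (\<lambda>x. x \<in> Y) (g # gs)) = length (filter (\<lambda>x. x \<in> Y) gs)"
      using False by simp
    ultimately show ?thesis using Cons.IH * by simp
  qed
qed

context lat begin

lemma calF_faces: "calF G \<subseteq> faces G"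
  by (auto simp: calF_def)

lemma iota_f_sub: "iota_f G f \<subseteq> vols G"
  by (auto simp: iota_f_def)

lemma iota_f_finite: "finite (iota_f G f)"
  by (rule finite_subset[OF iota_f_sub fin_vols])

lemma calF_single:
  assumes "f \<in> calF G" obtains u where "iota_f G f = {u}"
  using assms by (auto simp: calF_def card_1_singleton_iff)

lemma in_iota_f: "u \<in> iota_f G f \<longleftrightarrow> u \<in> vols G \<and> f \<in> bdv G u"
  by (simp add: iota_f_def)

lemma two_vol_not_calF:
  assumes "u \<in> iota_f G f" "u' \<in> iota_f G f" "u \<noteq> u'"
  shows "f \<notin> calF G"
proof
  assume "f \<in> calF G"
  then obtain w where "iota_f G f = {w}" by (rule calF_single)
  then show False using assms by auto
qed

definition adjF where
  "adjF a b \<longleftrightarrow> a \<in> calF G \<and> b \<in> calF G \<and> (\<exists>e\<in>edges G. a \<in> iota_e G e \<and> b \<in> iota_e G e)"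

lemma adjF_sym: "adjF a b \<Longrightarrow> adjF b a"
  by (auto simp: adjF_def)

lemma adjF_rt_sym: "adjF\<^sup>*\<^sup>* a b \<Longrightarrow> adjF\<^sup>*\<^sup>* b a"
  using rtranclp_sym[of adjF] adjF_sym by blast

lemma card2_eq:
  assumes "finite S" "card S = 2" "a \<in> S" "b \<in> S" "a \<noteq> b"
  shows "S = {a, b}"
proof -
  have "{a, b} \<subseteq> S" using assms by auto
  moreover have "card {a, b} = card S" using assms by simp
  ultimately show ?thesis using assms(1) card_subset_eq by blast
qed

lemma adjF_pair:
  assumes "adjF a b" "a \<noteq> b"
  obtains e where "e \<in> edges G" "iota_e G e \<inter> calF G = {a, b}"
proof -
  from assms obtain e where e: "e \<in> edges G" "a \<in> iota_e G e" "b \<in> iota_e G e" "a \<in> calF G" "b \<in> calF G"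
    by (auto simp: adjF_def)
  have fin: "finite (iota_e G e \<inter> calF G)" using iota_e_finite by simp
  have "card (iota_e G e \<inter> calF G) \<noteq> 0" using e fin by auto
  then have "card (iota_e G e \<inter> calF G) = 2" using edge_calF_count[OF e(1)] by simp
  then have "iota_e G e \<inter> calF G = {a, b}" using card2_eq[OF fin] e assms(2) by simp
  then show ?thesis using that e(1) by blast
qed

lemma closed_adj:
  assumes "closed_fs G X" "X \<subseteq> calF G" "adjF a b" "a \<in> X"
  shows "b \<in> X"
proof (rule ccontr)
  assume b: "b \<notin> X"
  then have "a \<noteq> b" using assms by auto
  then obtain e where e: "e \<in> edges G" "iota_e G e \<inter> calF G = {a, b}"
    using adjF_pair[OF assms(3)] by blast
  have "iota_e G e \<inter> X = iota_e G e \<inter> calF G \<inter> X" using assms(2) by auto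
  also have "\<dots> = {a}" using e(2) assms(4) b by auto
  finally have "card (iota_e G e \<inter> X) = 1" by simp
  then show False using assms(1) e(1) by (auto simp: closed_fs_def)
qed

lemma closed_adj_rt:
  assumes "adjF\<^sup>*\<^sup>* a b" "closed_fs G X" "X \<subseteq> calF G" "a \<in> X"
  shows "b \<in> X"
  using assms(1,4)
proof (induction rule: rtranclp_induct)
  case base then show ?case .
next
  case (step y z) then show ?case using closed_adj[OF assms(2,3)] by blast
qed

definition Sig where "Sig f = {g \<in> calF G. adjF\<^sup>*\<^sup>* f g}"

lemma Sig_sub: "Sig f \<subseteq> calF G"
  by (auto simp: Sig_def)

lemma Sig_self: "f \<in> calF G \<Longrightarrow> f \<in> Sig f"
  by (auto simp: Sig_def)

lemma Sig_eq: "g \<in> Sig f \<Longrightarrow> Sig g = Sig f"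
  unfolding Sig_def using adjF_rt_sym rtranclp_trans by (smt (verit, ccfv_threshold) Collect_cong mem_Collect_eq)

lemma Sig_closed: "closed_fs G (Sig f)"
  unfolding closed_fs_def
proof
  fix e assume e: "e \<in> edges G"
  have fin: "finite (iota_e G e \<inter> calF G)" using iota_e_finite by simp
  have sub: "iota_e G e \<inter> Sig f = iota_e G e \<inter> calF G \<inter> Sig f" using Sig_sub by auto
  from edge_calF_count[OF e] show "even (card (iota_e G e \<inter> Sig f))"
  proof
    assume "card (iota_e G e \<inter> calF G) = 0"
    then have "iota_e G e \<inter> calF G = {}" using fin by simp
    then show ?thesis using sub by simp
  next
    assume "card (iota_e G e \<inter> calF G) = 2"
    then obtain a b where ab: "a \<noteq> b" "iota_e G e \<inter> calF G = {a, b}" by (auto simp: card_2_iff)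
    then have "adjF a b" using e by (auto simp: adjF_def)
    then have "a \<in> Sig f \<longleftrightarrow> b \<in> Sig f" unfolding Sig_def
      using adjF_sym ab by (auto intro: rtranclp.rtrancl_into_rtrancl)
    then have "iota_e G e \<inter> Sig f = {} \<or> iota_e G e \<inter> Sig f = {a, b}" using sub ab by auto
    then show ?thesis using ab(1) by auto
  qed
qed

lemma closed_perp_iota:
  assumes "closed_fs G D" "r \<in> iota_e G ` edges G"
  shows "even (card (D \<inter> r))"
  using assms by (auto simp: closed_fs_def Int_commute)

lemma stab_snd_xspan:
  "p \<in> stab_group G \<Longrightarrow> snd p \<in> xspan (iota_e G ` edges G)"
proof (induction rule: stab_group.induct)
  case stab_id then show ?case by (simp add: xspan_empty)
next
  case (stab_B e p)
  then show ?case by (simp add: pmult_def xspan_step)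
next
  case (stab_A v p)
  then show ?case by (simp add: pmult_def)
qed

lemma xspan_stab:
  "z \<in> xspan (iota_e G ` edges G) \<Longrightarrow> ({}, z) \<in> stab_group G"
proof (induction rule: xspan.induct)
  case xspan_empty then show ?case by (rule stab_id)
next
  case (xspan_step r x)
  then obtain e where "e \<in> edges G" "r = iota_e G e" by blast
  then have "pmult ({}, iota_e G e) ({}, x) \<in> stab_group G" using xspan_step by (blast intro: stab_B)
  then show ?case using \<open>r = iota_e G e\<close> by (simp add: pmult_def)
qed

end

context lat begin

lemma fp_interior:
  assumes fp: "face_path (vols G) (bdv G) (faces G) fs vs" and i: "0 < i" "i < length vs"
  shows "fs ! i \<notin> calF G"
proof -
  from fp have d: "distinct vs" "set vs \<subseteq> vols G"
    and c: "\<forall>i<length vs. fs ! i \<in> bdv G (vs ! i) \<and> fs ! Suc i \<in> bdv G (vs ! i)"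
    by (auto simp: face_path_def)
  have "i - 1 < length vs" using i by simp
  then have "fs ! Suc (i - 1) \<in> bdv G (vs ! (i - 1))" using c by blast
  then have a: "fs ! i \<in> bdv G (vs ! (i - 1))" using i by simp
  have b: "fs ! i \<in> bdv G (vs ! i)" using c i by auto
  have "vs ! (i - 1) \<noteq> vs ! i" using d(1) i by (simp add: nth_eq_iff_index_eq)
  moreover have "vs ! (i - 1) \<in> iota_f G (fs ! i)" "vs ! i \<in> iota_f G (fs ! i)"
    using a b d(2) i by (auto simp: in_iota_f)
  ultimately show ?thesis using two_vol_not_calF by blast
qed

lemma face_equiv_Sig:
  assumes f: "f \<in> calF G" and fe: "face_equiv G f g"
  shows "g \<in> Sig f"
proof (cases "f = g")
  case True then show ?thesis using Sig_self f by simp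
next
  case False
  then obtain fs vs where fp: "face_path (vols G) (bdv G) (faces G) fs vs"
    and hd: "hd fs = f" and lt: "last fs = g" and st: "({}, zprod_supp fs) \<in> stab_group G"
    and g: "g \<in> calF G"
    using fe by (auto simp: face_equiv_def)
  show ?thesis
  proof (rule ccontr)
    assume gS: "g \<notin> Sig f"
    let ?D = "Sig f"
    have finD: "finite ?D" using Sig_sub calF_faces fin_faces finite_subset by metis
    have "snd ({}::'f set, zprod_supp fs) \<in> xspan (iota_e G ` edges G)" by (rule stab_snd_xspan[OF st])
    then have "even (card (?D \<inter> zprod_supp fs))"
      using xspan_even[OF _ finD] closed_perp_iota[OF Sig_closed] by simp
    then have ev: "even (length (filter (\<lambda>x. x \<in> ?D) fs))" using zprod_parity by blast
    have len: "length fs = Suc (length vs)" using fp by (simp add: face_path_def)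
    have "vs \<noteq> []"
    proof
      assume "vs = []"
      then have "length fs = 1" using len by simp
      then have "hd fs = last fs" by (cases fs) auto
      then show False using hd lt False by simp
    qed
    define n where "n = length vs"
    have fs0: "fs ! 0 = f" using hd len by (cases fs) auto
    have fsn: "fs ! n = g" using lt len n_def by (metis diff_Suc_1 last_conv_nth list.size(3) nat.distinct(1))
    have "{i. i < length fs \<and> fs ! i \<in> ?D} = {0}"
    proof (intro set_eqI iffI)
      fix i assume "i \<in> {i. i < length fs \<and> fs ! i \<in> ?D}"
      then have i: "i < Suc n" "fs ! i \<in> ?D" using len n_def by auto
      show "i \<in> {0}"
      proof (rule ccontr)
        assume "i \<notin> {0}"
        then have "0 < i" by simp
        show False
        proof (cases "i < n")
          case True
          then show False using fp_interior[OF fp \<open>0 < i\<close>] i(2) Sig_sub n_def by blast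
        next
          case False
          then have "i = n" using i(1) by simp
          then show False using i(2) fsn gS by simp
        qed
      qed
    next
      fix i :: nat assume "i \<in> {0}"
      then show "i \<in> {i. i < length fs \<and> fs ! i \<in> ?D}" using fs0 len Sig_self[OF f] by simp
    qed
    then have "length (filter (\<lambda>x. x \<in> ?D) fs) = 1" by (simp add: length_filter_conv_card)
    then show False using ev by simp
  qed
qed

end

context lat begin

lemma aug_vols_finite: "finite (aug_vols G)"
proof -
  have "face_classes G \<subseteq> Pow (faces G)" using calF_faces by (auto simp: face_classes_def)
  then have "finite (face_classes G)" using fin_faces by (meson finite_Pow_iff finite_subset)
  then show ?thesis using fin_vols by (simp add: aug_vols_def)
qed

lemma face_classes_sub: "C \<in> face_classes G \<Longrightarrow> C \<subseteq> calF G"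
  by (auto simp: face_classes_def)

lemma closed_decomp:
  assumes D: "D \<subseteq> faces G" "closed_fs G D"
  obtains V X where "closed_fs G V" "X \<subseteq> calF G" "closed_fs G X" "D = symdiff V X"
     "\<And>z. finite z \<Longrightarrow> (\<And>v. v \<in> vols G \<Longrightarrow> even (card (z \<inter> bdv G v))) \<Longrightarrow> even (card (z \<inter> V))"
proof -
  have "bd_faces G D = {}" using bd_faces_empty_iff[OF D(1)] D(2) by simp
  then obtain W where W: "W \<subseteq> aug_vols G" "D = {f \<in> faces G. odd (card {w \<in> W. f \<in> aug_bd G w})}"
    using l1 D(1) unfolding L1_def by blast
  have finW: "finite W" using W(1) aug_vols_finite finite_subset by blast
  define Wl where "Wl = W \<inter> range Inl"
  define Wr where "Wr = W - range Inl"
  have WU: "W = Wl \<union> Wr" "Wl \<inter> Wr = {}" unfolding Wl_def Wr_def by auto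
  have finl: "finite Wl" "finite Wr" using finW unfolding Wl_def Wr_def by auto
  define V where "V = faces G \<inter> xs_sum (aug_bd G) Wl"
  define X where "X = xs_sum (aug_bd G) Wr"
  have Wl_vol: "\<And>w. w \<in> Wl \<Longrightarrow> \<exists>v. w = Inl v \<and> v \<in> vols G"
    using W(1) unfolding Wl_def aug_vols_def by auto
  have Wr_cl: "\<And>w. w \<in> Wr \<Longrightarrow> \<exists>C. w = Inr C \<and> C \<in> face_classes G"
    using W(1) unfolding Wr_def aug_vols_def by auto
  have Vc: "closed_fs G V" unfolding V_def
  proof (rule closed_fs_Int_faces, rule closed_fs_xs_sum[OF fin_faces finl(1)])
    fix w assume "w \<in> Wl"
    then obtain v where "w = Inl v" "v \<in> vols G" using Wl_vol by blast
    then show "closed_fs G (aug_bd G w)" using bdv_closed by (simp add: aug_bd_def)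
  qed
  have XF: "X \<subseteq> calF G" unfolding X_def
  proof (rule xs_sum_sub)
    fix w assume "w \<in> Wr"
    then obtain C where "w = Inr C" "C \<in> face_classes G" using Wr_cl by blast
    then show "aug_bd G w \<subseteq> calF G" using face_classes_sub by (simp add: aug_bd_def)
  qed
  have "D = faces G \<inter> xs_sum (aug_bd G) W" using W(2) by (auto simp: xs_sum_def)
  also have "\<dots> = faces G \<inter> symdiff (xs_sum (aug_bd G) Wl) X"
  proof -
    have "xs_sum (aug_bd G) W = symdiff (xs_sum (aug_bd G) Wl) (xs_sum (aug_bd G) Wr)"
      using WU(1) xs_sum_union[OF finl WU(2), of "aug_bd G"] by metis
    then show ?thesis unfolding X_def by simp
  qed
  also have "\<dots> = symdiff V X" using XF calF_faces unfolding V_def by (auto simp: symdiff_def)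
  finally have DVX: "D = symdiff V X" .
  have "X = symdiff D V" using DVX by (auto simp: symdiff_def)
  then have Xc: "closed_fs G X" using closed_fs_symdiff[OF fin_faces D(2) Vc] by simp
  have Vz: "even (card (z \<inter> V))" if z: "finite z" "\<And>v. v \<in> vols G \<Longrightarrow> even (card (z \<inter> bdv G v))" for z
  proof -
    have "even (card (z \<inter> xs_sum (aug_bd G) Wl))"
    proof (rule xs_sum_even[OF finl(1) z(1)])
      fix w assume "w \<in> Wl"
      then obtain v where "w = Inl v" "v \<in> vols G" using Wl_vol by blast
      then show "even (card (z \<inter> aug_bd G w))" using z(2) by (simp add: aug_bd_def)
    qed
    moreover have "z \<inter> V = faces G \<inter> (z \<inter> xs_sum (aug_bd G) Wl)" unfolding V_def by auto
    moreover have "xs_sum (aug_bd G) Wl \<subseteq> faces G"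
    proof (rule xs_sum_sub)
      fix w assume "w \<in> Wl"
      then obtain v where "w = Inl v" "v \<in> vols G" using Wl_vol by blast
      then show "aug_bd G w \<subseteq> faces G" using cc by (auto simp: aug_bd_def cell_complex3_def)
    qed
    then have "z \<inter> xs_sum (aug_bd G) Wl \<subseteq> faces G" by blast
    ultimately show ?thesis by (simp add: Int_absorb1)
  qed
  show ?thesis using that[OF Vc XF Xc DVX Vz] by blast
qed

end

context lat begin

lemma Sig_face_equiv:
  assumes f: "f \<in> calF G" and gS: "g \<in> Sig f"
  shows "face_equiv G f g"
proof (cases "f = g")
  case True then show ?thesis using f by (simp add: face_equiv_def)
next
  case fg: False
  have g: "g \<in> calF G" and rt: "adjF\<^sup>*\<^sup>* f g" using gS by (auto simp: Sig_def)
  obtain u where u: "iota_f G f = {u}" using calF_single[OF f] by blast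
  obtain u' where u': "iota_f G g = {u'}" using calF_single[OF g] by blast
  have uv: "u \<in> vols G" "u' \<in> vols G" using u u' iota_f_sub by auto
  let ?r = "\<lambda>x y. x \<in> vols G \<and> y \<in> vols G \<and> (\<exists>h\<in>faces G. iota_f G h = {x, y})"
  have all: "\<forall>a\<in>vols G. \<forall>b\<in>vols G. ?r\<^sup>*\<^sup>* a b"
    using dconn unfolding dual_connected_def conn_def by simp
  have ruu: "?r\<^sup>*\<^sup>* u u'" using all uv by blast
  obtain us where us: "us \<noteq> []" "hd us = u" "last us = u'" "distinct us"
      "\<forall>i. Suc i < length us \<longrightarrow> ?r (us ! i) (us ! Suc i)"
    using walk_distinct[OF ruu] by blast
  define m where "m = length us"
  have m1: "m \<ge> 1" using us(1) m_def by (cases us) auto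
  have us0: "us ! 0 = u" using us(1,2) by (cases us) auto
  have usl: "us ! (m - 1) = u'" using us(1,3) m_def by (simp add: last_conv_nth)
  have usv: "\<And>p. p < m \<Longrightarrow> us ! p \<in> vols G"
  proof -
    fix p assume "p < m"
    show "us ! p \<in> vols G"
    proof (cases p)
      case 0 then show ?thesis using us0 uv by simp
    next
      case (Suc q) then show ?thesis using us(5) \<open>p < m\<close> m_def by blast
    qed
  qed
  define hsel where "hsel i = (SOME h. h \<in> faces G \<and> iota_f G h = {us ! i, us ! Suc i})" for i
  have hsel: "\<And>i. Suc i < m \<Longrightarrow> hsel i \<in> faces G \<and> iota_f G (hsel i) = {us ! i, us ! Suc i}"
  proof -
    fix i assume "Suc i < m"
    then have "\<exists>h. h \<in> faces G \<and> iota_f G h = {us ! i, us ! Suc i}" using us(5) m_def by blast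
    then show "hsel i \<in> faces G \<and> iota_f G (hsel i) = {us ! i, us ! Suc i}"
      unfolding hsel_def by (rule someI_ex)
  qed
  define fs where "fs = f # map hsel [0..<m - 1] @ [g]"
  have lenfs: "length fs = Suc m" using m1 unfolding fs_def by simp
  have fs0: "fs ! 0 = f" unfolding fs_def by simp
  have fsm: "fs ! m = g" unfolding fs_def using m1
    by (simp add: nth_append)
  have fsi: "\<And>p. 0 < p \<Longrightarrow> p < m \<Longrightarrow> fs ! p = hsel (p - 1)"
  proof -
    fix p assume p: "0 < p" "p < m"
    then have "fs ! p = (map hsel [0..<m - 1] @ [g]) ! (p - 1)" unfolding fs_def
      by (cases p) auto
    moreover have "p - 1 < m - 1" using p by arith
    ultimately show "fs ! p = hsel (p - 1)" by (simp add: nth_append)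
  qed
  have char: "\<And>p v. p < Suc m \<Longrightarrow> v \<in> iota_f G (fs ! p) \<longleftrightarrow>
        ((p < m \<and> us ! p = v) \<or> (0 < p \<and> us ! (p - 1) = v))"
  proof -
    fix p v assume p: "p < Suc m"
    show "v \<in> iota_f G (fs ! p) \<longleftrightarrow> ((p < m \<and> us ! p = v) \<or> (0 < p \<and> us ! (p - 1) = v))"
    proof (cases "p = 0")
      case True then show ?thesis using fs0 u us0 m1 by auto
    next
      case False
      show ?thesis
      proof (cases "p = m")
        case True then show ?thesis using fsm u' usl False by auto
      next
        case False': False
        then have "p < m" using p by simp
        then have "fs ! p = hsel (p - 1)" "Suc (p - 1) < m" using fsi False by auto
        then have "iota_f G (fs ! p) = {us ! (p - 1), us ! p}" using hsel False by auto
        then show ?thesis using \<open>p < m\<close> False by auto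
      qed
    qed
  qed
  have setfs: "set fs \<subseteq> faces G"
  proof -
    have "set (map hsel [0..<m - 1]) \<subseteq> faces G" using hsel by auto
    then show ?thesis using f g calF_faces unfolding fs_def by auto
  qed
  have fp: "face_path (vols G) (bdv G) (faces G) fs us"
    unfolding face_path_def
  proof (intro conjI)
    show "length fs = Suc (length us)" using lenfs m_def by simp
    show "set fs \<subseteq> faces G" by (rule setfs)
    show "set us \<subseteq> vols G" using usv m_def by (auto simp: in_set_conv_nth)
    show "distinct us" by (rule us(4))
    show "\<forall>i<length us. fs ! i \<in> bdv G (us ! i) \<and> fs ! Suc i \<in> bdv G (us ! i)"
    proof (intro allI impI)
      fix i assume i: "i < length us"
      have "us ! i \<in> iota_f G (fs ! i)" using char[of i "us ! i"] i m_def by simp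
      moreover have "us ! i \<in> iota_f G (fs ! Suc i)" using char[of "Suc i" "us ! i"] i m_def by simp
      ultimately show "fs ! i \<in> bdv G (us ! i) \<and> fs ! Suc i \<in> bdv G (us ! i)"
        by (simp add: in_iota_f)
    qed
  qed
  have hdfs: "hd fs = f" unfolding fs_def by simp
  have lastfs: "last fs = g" unfolding fs_def by simp
  define z where "z = zprod_supp fs"
  have zF: "z \<subseteq> faces G" unfolding z_def by (rule subset_trans[OF zprod_supp_sub setfs])
  have finz: "finite z" unfolding z_def by (rule zprod_supp_finite)
  have vol_even: "even (card (z \<inter> bdv G v))" if v: "v \<in> vols G" for v
  proof -
    define S2 where "S2 = {p. p < Suc m \<and> ((p < Suc m - 1 \<and> us ! p = v) \<or> (0 < p \<and> us ! (p - 1) = v))}"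
    have A: "even (card (bdv G v \<inter> z)) \<longleftrightarrow> even (length (filter (\<lambda>x. x \<in> bdv G v) fs))"
      unfolding z_def by (rule zprod_parity)
    have B: "length (filter (\<lambda>x. x \<in> bdv G v) fs) = card {p. p < Suc m \<and> fs ! p \<in> bdv G v}"
      using lenfs by (simp add: length_filter_conv_card)
    have C: "{p. p < Suc m \<and> fs ! p \<in> bdv G v} = S2"
      unfolding S2_def
    proof (rule Collect_cong)
      fix p
      show "(p < Suc m \<and> fs ! p \<in> bdv G v) =
        (p < Suc m \<and> ((p < Suc m - 1 \<and> us ! p = v) \<or> (0 < p \<and> us ! (p - 1) = v)))"
      proof (cases "p < Suc m")
        case True
        have "fs ! p \<in> bdv G v \<longleftrightarrow> v \<in> iota_f G (fs ! p)" using v by (simp add: in_iota_f)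
        then show ?thesis using char[OF True, of v] True by simp
      qed simp
    qed
    have len: "Suc (length us) = Suc m" using m_def by simp
    have m2: "Suc m \<ge> 2" using m1 by simp
    have "card S2 = 0 \<or> card S2 = 2"
      unfolding S2_def by (rule open_idx_count[OF len m2 us(4)])
    then have "even (card S2)" by auto
    then have "even (card (bdv G v \<inter> z))" using A B C by simp
    then show ?thesis by (simp add: Int_commute)
  qed
  have interior: "\<And>p. 0 < p \<Longrightarrow> p < m \<Longrightarrow> fs ! p \<notin> calF G"
  proof -
    fix p assume "0 < p" "p < m"
    then show "fs ! p \<notin> calF G" using fp_interior[OF fp, of p] m_def by simp
  qed
  have perp: "even (card (D \<inter> z))" if D: "D \<subseteq> faces G" "\<forall>r\<in>iota_e G ` edges G. even (card (D \<inter> r))" for D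
  proof -
    have Dc: "closed_fs G D" using D(2) by (auto simp: closed_fs_def Int_commute)
    obtain V X where VX: "closed_fs G V" "X \<subseteq> calF G" "closed_fs G X" "D = symdiff V X"
      "\<And>z. finite z \<Longrightarrow> (\<And>v. v \<in> vols G \<Longrightarrow> even (card (z \<inter> bdv G v))) \<Longrightarrow> even (card (z \<inter> V))"
      using closed_decomp[OF D(1) Dc] by blast
    have e1: "even (card (z \<inter> V))" using VX(5)[OF finz vol_even] .
    have fX: "f \<in> X \<longleftrightarrow> g \<in> X"
      using closed_adj_rt[OF rt VX(3) VX(2)] closed_adj_rt[OF adjF_rt_sym[OF rt] VX(3) VX(2)] by blast
    have "{p. p < length fs \<and> fs ! p \<in> X} = (if f \<in> X then {0, m} else {})"
    proof (intro set_eqI iffI)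
      fix p assume "p \<in> {p. p < length fs \<and> fs ! p \<in> X}"
      then have p: "p < Suc m" "fs ! p \<in> X" using lenfs by auto
      have "p = 0 \<or> p = m"
      proof (rule ccontr)
        assume "\<not> (p = 0 \<or> p = m)"
        then have "0 < p" "p < m" using p by auto
        then show False using interior p(2) VX(2) by blast
      qed
      then show "p \<in> (if f \<in> X then {0, m} else {})" using p fs0 fsm fX by auto
    next
      fix p assume "p \<in> (if f \<in> X then {0, m} else {})"
      then show "p \<in> {p. p < length fs \<and> fs ! p \<in> X}" using lenfs fs0 fsm fX
        by (cases "f \<in> X") auto
    qed
    then have "even (length (filter (\<lambda>x. x \<in> X) fs))"
      using m1 by (simp add: length_filter_conv_card)
    then have "even (card (X \<inter> z))" unfolding z_def using zprod_parity by blast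
    then have e2: "even (card (z \<inter> X))" by (simp add: Int_commute)
    have "even (card (z \<inter> D))" using even_Int_symdiff[OF finz e1 e2] VX(4) by simp
    then show ?thesis by (simp add: Int_commute)
  qed
  have "z \<in> xspan (iota_e G ` edges G)"
    by (rule perp_in_xspan[OF fin_faces]) (use iota_e_sub zF perp in auto)
  then have "({}, z) \<in> stab_group G" by (rule xspan_stab)
  then show ?thesis unfolding face_equiv_def using f g fp hdfs lastfs z_def by blast
qed

lemma class_eq: "f \<in> calF G \<Longrightarrow> {g \<in> calF G. face_equiv G f g} = Sig f"
  using face_equiv_Sig Sig_face_equiv Sig_sub by blast

lemma face_classes_eq: "face_classes G = Sig ` calF G"
  unfolding face_classes_def using class_eq by auto

end

lemma path_seq:
  assumes fp: "face_path Wv bd F fs vs" and h: "hd fs \<in> bd \<nu>" and l: "last fs \<in> bd \<nu>'"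
  shows "\<forall>i < length fs. fs ! i \<in> bd ((\<nu> # vs @ [\<nu>']) ! i) \<and> fs ! i \<in> bd ((\<nu> # vs @ [\<nu>']) ! Suc i)"
proof (intro allI impI)
  fix i assume i: "i < length fs"
  have len: "length fs = Suc (length vs)" and c: "\<forall>i<length vs. fs ! i \<in> bd (vs ! i) \<and> fs ! Suc i \<in> bd (vs ! i)"
    using fp by (auto simp: face_path_def)
  have ne: "fs \<noteq> []" using len by auto
  have A: "fs ! i \<in> bd ((\<nu> # vs @ [\<nu>']) ! i)"
  proof (cases i)
    case 0 then show ?thesis using h ne by (simp add: hd_conv_nth)
  next
    case (Suc j)
    then have j: "j < length vs" using i len by simp
    then have "fs ! Suc j \<in> bd (vs ! j)" using c by blast
    then show ?thesis using Suc j by (simp add: nth_append)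
  qed
  have B: "fs ! i \<in> bd ((\<nu> # vs @ [\<nu>']) ! Suc i)"
  proof (cases "i < length vs")
    case True
    then show ?thesis using c by (simp add: nth_append)
  next
    case False
    then have "i = length vs" using i len by simp
    moreover have "last fs = fs ! length vs" using ne len by (simp add: last_conv_nth)
    ultimately show ?thesis using l by (simp add: nth_append)
  qed
  show "fs ! i \<in> bd ((\<nu> # vs @ [\<nu>']) ! i) \<and> fs ! i \<in> bd ((\<nu> # vs @ [\<nu>']) ! Suc i)"
    using A B by blast
qed

context lat begin

lemma aug_bd_faces: "w \<in> aug_vols G \<Longrightarrow> aug_bd G w \<subseteq> faces G"
proof (cases w)
  case (Inl v)
  assume "w \<in> aug_vols G"
  then have "v \<in> vols G" using Inl by (auto simp: aug_vols_def)
  then show ?thesis using cc Inl by (auto simp: aug_bd_def cell_complex3_def)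
next
  case (Inr C)
  assume "w \<in> aug_vols G"
  then have "C \<in> face_classes G" using Inr by (auto simp: aug_vols_def)
  then show ?thesis using Inr face_classes_sub calF_faces by (auto simp: aug_bd_def)
qed

lemma aug_bd_closed: "w \<in> aug_vols G \<Longrightarrow> closed_fs G (aug_bd G w)"
  using bdv_closed Sig_closed face_classes_eq
  by (auto simp: aug_vols_def aug_bd_def)

lemma aug_bd_ne: "w \<in> aug_vols G \<Longrightarrow> aug_bd G w \<noteq> {}"
proof (cases w)
  case (Inl v)
  assume "w \<in> aug_vols G"
  then have "v \<in> vols G" using Inl by (auto simp: aug_vols_def)
  then show ?thesis using cc Inl by (auto simp: aug_bd_def cell_complex3_def)
next
  case (Inr C)
  assume "w \<in> aug_vols G"
  then have "C \<in> face_classes G" using Inr by (auto simp: aug_vols_def)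
  then obtain f where "f \<in> calF G" "C = Sig f" using face_classes_eq by auto
  then show ?thesis using Inr Sig_self by (auto simp: aug_bd_def)
qed

lemma aug_set:
  assumes h: "h \<in> faces G"
  shows "{w \<in> aug_vols G. h \<in> aug_bd G w} = Inl ` iota_f G h \<union> (if h \<in> calF G then {Inr (Sig h)} else {})"
proof (intro set_eqI iffI)
  fix w assume "w \<in> {w \<in> aug_vols G. h \<in> aug_bd G w}"
  then have w: "w \<in> aug_vols G" "h \<in> aug_bd G w" by auto
  show "w \<in> Inl ` iota_f G h \<union> (if h \<in> calF G then {Inr (Sig h)} else {})"
  proof (cases w)
    case (Inl v)
    then show ?thesis using w by (auto simp: aug_vols_def aug_bd_def in_iota_f)
  next
    case (Inr C)
    then have "C \<in> face_classes G" "h \<in> C" using w by (auto simp: aug_vols_def aug_bd_def)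
    then obtain f where f: "f \<in> calF G" "C = Sig f" using face_classes_eq by auto
    then have "h \<in> calF G" "Sig h = C" using \<open>h \<in> C\<close> Sig_sub Sig_eq by auto
    then show ?thesis using Inr by simp
  qed
next
  fix w assume "w \<in> Inl ` iota_f G h \<union> (if h \<in> calF G then {Inr (Sig h)} else {})"
  then show "w \<in> {w \<in> aug_vols G. h \<in> aug_bd G w}"
  proof
    assume "w \<in> Inl ` iota_f G h"
    then show ?thesis by (auto simp: aug_vols_def aug_bd_def in_iota_f)
  next
    assume a: "w \<in> (if h \<in> calF G then {Inr (Sig h)} else {})"
    then have "h \<in> calF G" "w = Inr (Sig h)" by (auto split: if_splits)
    then show ?thesis using face_classes_eq Sig_self by (auto simp: aug_vols_def aug_bd_def)
  qed
qed

lemma aug_card: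
  assumes h: "h \<in> faces G"
  shows "card {w \<in> aug_vols G. h \<in> aug_bd G w} = 0 \<or> card {w \<in> aug_vols G. h \<in> aug_bd G w} = 2"
proof -
  have ci: "card (Inl ` iota_f G h :: ('v + 'f set) set) = card (iota_f G h)"
    by (rule card_image) simp
  have le2: "card (iota_f G h) \<le> 2" using two h by (auto simp: at_most_two_vols_def)
  show ?thesis
  proof (cases "h \<in> calF G")
    case True
    then obtain u where u: "iota_f G h = {u}" by (rule calF_single)
    then have "{w \<in> aug_vols G. h \<in> aug_bd G w} = {Inl u, Inr (Sig h)}"
      using aug_set[OF h] True by auto
    then show ?thesis by simp
  next
    case False
    then have "card (iota_f G h) \<noteq> 1" using h by (auto simp: calF_def)
    then have "card (iota_f G h) = 0 \<or> card (iota_f G h) = 2" using le2 by auto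
    then show ?thesis using aug_set[OF h] False ci by simp
  qed
qed

lemma aug_pair:
  assumes h: "h \<in> faces G" and ab: "a \<in> aug_vols G" "b \<in> aug_vols G" "a \<noteq> b"
    "h \<in> aug_bd G a" "h \<in> aug_bd G b"
  shows "{w \<in> aug_vols G. h \<in> aug_bd G w} = {a, b}"
proof -
  have fin: "finite {w \<in> aug_vols G. h \<in> aug_bd G w}" using aug_vols_finite by simp
  have "a \<in> {w \<in> aug_vols G. h \<in> aug_bd G w}" "b \<in> {w \<in> aug_vols G. h \<in> aug_bd G w}" using ab by auto
  then have "card {w \<in> aug_vols G. h \<in> aug_bd G w} \<noteq> 0" using fin by auto
  then have "card {w \<in> aug_vols G. h \<in> aug_bd G w} = 2" using aug_card[OF h] by simp
  then show ?thesis using card2_eq[OF fin] ab by simp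
qed

definition step_all where
  "step_all a b \<longleftrightarrow> a \<in> aug_vols G \<and> b \<in> aug_vols G \<and> (\<exists>h\<in>faces G. h \<in> aug_bd G a \<and> h \<in> aug_bd G b)"

lemma step_all_sym: "step_all a b \<Longrightarrow> step_all b a"
  by (auto simp: step_all_def)

lemma H_conn_vols:
  assumes "v \<in> vols G" "v' \<in> vols G"
  shows "step_all\<^sup>*\<^sup>* (Inl v) (Inl v')"
proof -
  let ?r = "\<lambda>x y. x \<in> vols G \<and> y \<in> vols G \<and> (\<exists>h\<in>faces G. iota_f G h = {x, y})"
  have all: "\<forall>a\<in>vols G. \<forall>b\<in>vols G. ?r\<^sup>*\<^sup>* a b"
    using dconn unfolding dual_connected_def conn_def by simp
  have "?r\<^sup>*\<^sup>* v v'" using all assms by blast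
  then show ?thesis
  proof (induction rule: rtranclp_induct)
    case base then show ?case by simp
  next
    case (step y z)
    then obtain h where "h \<in> faces G" "iota_f G h = {y, z}" "y \<in> vols G" "z \<in> vols G" by blast
    then have "step_all (Inl y) (Inl z)"
      unfolding step_all_def aug_vols_def aug_bd_def
      by (auto simp: set_eq_iff in_iota_f)
    then show ?case using step.IH by (meson rtranclp.rtrancl_into_rtrancl)
  qed
qed

lemma H_conn_to_vol:
  assumes "a \<in> aug_vols G"
  shows "\<exists>u \<in> vols G. step_all\<^sup>*\<^sup>* a (Inl u) \<and> step_all\<^sup>*\<^sup>* (Inl u) a"
proof (cases a)
  case (Inl v)
  then have "v \<in> vols G" using assms by (auto simp: aug_vols_def)
  then show ?thesis using Inl by blast
next
  case (Inr C)
  then have "C \<in> face_classes G" using assms by (auto simp: aug_vols_def)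
  then obtain f where f: "f \<in> calF G" "C = Sig f" using face_classes_eq by auto
  obtain u where u: "iota_f G f = {u}" using calF_single[OF f(1)] by blast
  then have uv: "u \<in> vols G" "f \<in> bdv G u" by (auto simp: in_iota_f)
  have "step_all a (Inl u)"
    unfolding step_all_def using assms Inr f uv Sig_self calF_faces
    by (auto simp: aug_vols_def aug_bd_def)
  then show ?thesis using uv(1) step_all_sym by blast
qed

lemma H_conn:
  assumes "a \<in> aug_vols G" "b \<in> aug_vols G"
  shows "step_all\<^sup>*\<^sup>* a b"
proof -
  obtain u where u: "u \<in> vols G" "step_all\<^sup>*\<^sup>* a (Inl u)" using H_conn_to_vol[OF assms(1)] by blast
  obtain u' where u': "u' \<in> vols G" "step_all\<^sup>*\<^sup>* (Inl u') b" using H_conn_to_vol[OF assms(2)] by blast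
  have "step_all\<^sup>*\<^sup>* (Inl u) (Inl u')" using H_conn_vols u(1) u'(1) by blast
  then show ?thesis using u(2) u'(2) by (meson rtranclp_trans)
qed

end

context lat begin

lemma no_cycle:
  assumes nc: "\<not> is_cut_set G K" and D: "D \<subseteq> K" "D \<subseteq> faces G" "bd_faces G D = {}"
  shows "D = {}"
proof (rule ccontr)
  assume "D \<noteq> {}"
  then obtain f0 where f0: "f0 \<in> D" by blast
  obtain W where W: "W \<subseteq> aug_vols G" "D = {f \<in> faces G. odd (card {w \<in> W. f \<in> aug_bd G w})}"
    using l1 D(2,3) unfolding L1_def by blast
  have f0F: "f0 \<in> faces G" using f0 D(2) by blast
  have odd0: "odd (card {w \<in> W. f0 \<in> aug_bd G w})" using f0 W(2) by blast
  then have "{w \<in> W. f0 \<in> aug_bd G w} \<noteq> {}" by (metis card.empty even_zero)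
  then obtain \<nu> where \<nu>: "\<nu> \<in> W" "f0 \<in> aug_bd G \<nu>" by blast
  have "W \<noteq> aug_vols G"
  proof
    assume "W = aug_vols G"
    then show False using odd0 aug_card[OF f0F] by auto
  qed
  then obtain \<nu>' where \<nu>': "\<nu>' \<in> aug_vols G" "\<nu>' \<notin> W" using W(1) by blast
  have \<nu>a: "\<nu> \<in> aug_vols G" using \<nu> W(1) by blast
  have "\<forall>fs vs. face_path (aug_vols G) (aug_bd G) (faces G) fs vs \<and>
        hd fs \<in> aug_bd G \<nu> \<and> last fs \<in> aug_bd G \<nu>' \<and> \<nu> \<notin> set vs \<and> \<nu>' \<notin> set vs
        \<longrightarrow> set fs \<inter> K \<noteq> {}"
  proof (intro allI impI)
    fix fs vs
    assume a: "face_path (aug_vols G) (aug_bd G) (faces G) fs vs \<and>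
        hd fs \<in> aug_bd G \<nu> \<and> last fs \<in> aug_bd G \<nu>' \<and> \<nu> \<notin> set vs \<and> \<nu>' \<notin> set vs"
    then have fp: "face_path (aug_vols G) (aug_bd G) (faces G) fs vs"
      and h: "hd fs \<in> aug_bd G \<nu>" and l: "last fs \<in> aug_bd G \<nu>'"
      and n1: "\<nu> \<notin> set vs" and n2: "\<nu>' \<notin> set vs" by auto
    show "set fs \<inter> K \<noteq> {}"
    proof
      assume disj: "set fs \<inter> K = {}"
      define sq where "sq = \<nu> # vs @ [\<nu>']"
      have ps: "\<forall>i < length fs. fs ! i \<in> aug_bd G (sq ! i) \<and> fs ! i \<in> aug_bd G (sq ! Suc i)"
        unfolding sq_def by (rule path_seq[OF fp h l])
      have len: "length fs = Suc (length vs)" "length sq = Suc (length fs)"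
        using fp unfolding sq_def by (auto simp: face_path_def)
      have "\<nu> \<noteq> \<nu>'" using \<nu>(1) \<nu>'(2) by blast
      then have dsq: "distinct sq" using fp n1 n2 unfolding sq_def by (auto simp: face_path_def)
      have sqa: "set sq \<subseteq> aug_vols G" using fp \<nu>a \<nu>'(1) unfolding sq_def by (auto simp: face_path_def)
      have setF: "set fs \<subseteq> faces G" using fp by (simp add: face_path_def)
      have "\<forall>i. i < length sq \<longrightarrow> sq ! i \<in> W"
      proof (intro allI)
        fix i show "i < length sq \<longrightarrow> sq ! i \<in> W"
        proof (induction i)
          case 0 then show ?case using \<nu>(1) unfolding sq_def by simp
        next
          case (Suc i)
          show ?case
          proof
            assume si: "Suc i < length sq"
            then have i: "i < length fs" using len by simp
            have inW: "sq ! i \<in> W" using Suc.IH si by simp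
            let ?h = "fs ! i"
            have hF: "?h \<in> faces G" using setF i by auto
            have "?h \<in> set fs" using i by simp
            then have hK: "?h \<notin> K" using disj by blast
            then have "?h \<notin> D" using D(1) by blast
            then have ev: "even (card {w \<in> W. ?h \<in> aug_bd G w})" using W(2) hF by blast
            have ne: "sq ! i \<noteq> sq ! Suc i" using dsq si by (simp add: nth_eq_iff_index_eq)
            have aa: "sq ! i \<in> aug_vols G" "sq ! Suc i \<in> aug_vols G" using sqa si by auto
            have pr: "{w \<in> aug_vols G. ?h \<in> aug_bd G w} = {sq ! i, sq ! Suc i}"
              using aug_pair[OF hF aa ne] ps i by blast
            have "{w \<in> W. ?h \<in> aug_bd G w} = {w \<in> aug_vols G. ?h \<in> aug_bd G w} \<inter> W"
              using W(1) by auto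
            then have eq: "{w \<in> W. ?h \<in> aug_bd G w} = {sq ! i, sq ! Suc i} \<inter> W" using pr by simp
            show "sq ! Suc i \<in> W"
            proof (rule ccontr)
              assume "sq ! Suc i \<notin> W"
              then have "{w \<in> W. ?h \<in> aug_bd G w} = {sq ! i}" using eq inW by auto
              then show False using ev by simp
            qed
          qed
        qed
      qed
      moreover have "sq ! length fs = \<nu>'" using len unfolding sq_def by (simp add: nth_append)
      ultimately show False using \<nu>'(2) len by auto
    qed
  qed
  then have "is_cut_set G K" unfolding is_cut_set_def using \<nu>a \<nu>'(1) by blast
  then show False using nc by simp
qed

end

context lat begin

lemma cut_cycle:
  assumes cut: "is_cut_set G K"
  shows "\<exists>T. T \<subseteq> faces G \<and> T \<subseteq> K \<and> T \<noteq> {} \<and> bd_faces G T = {}"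
proof -
  obtain \<nu> \<nu>' where nu: "\<nu> \<in> aug_vols G" "\<nu>' \<in> aug_vols G"
    and P: "\<And>fs vs. face_path (aug_vols G) (aug_bd G) (faces G) fs vs \<Longrightarrow>
        hd fs \<in> aug_bd G \<nu> \<Longrightarrow> last fs \<in> aug_bd G \<nu>' \<Longrightarrow> \<nu> \<notin> set vs \<Longrightarrow> \<nu>' \<notin> set vs
        \<Longrightarrow> set fs \<inter> K \<noteq> {}"
    using cut unfolding is_cut_set_def by blast
  show ?thesis
  proof (cases "\<nu> = \<nu>'")
    case True
    have "aug_bd G \<nu> \<subseteq> K"
    proof
      fix h assume h: "h \<in> aug_bd G \<nu>"
      have "face_path (aug_vols G) (aug_bd G) (faces G) [h] []"
        using aug_bd_faces[OF nu(1)] h by (auto simp: face_path_def)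
      then have "set [h] \<inter> K \<noteq> {}" using P[of "[h]" "[]"] h True by simp
      then show "h \<in> K" by simp
    qed
    moreover have "bd_faces G (aug_bd G \<nu>) = {}"
      using bd_faces_empty_iff[OF aug_bd_faces[OF nu(1)]] aug_bd_closed[OF nu(1)] by simp
    ultimately show ?thesis using aug_bd_faces[OF nu(1)] aug_bd_ne[OF nu(1)] by blast
  next
    case False
    define stepK where "stepK a b \<longleftrightarrow> a \<in> aug_vols G \<and> b \<in> aug_vols G \<and>
       (\<exists>h\<in>faces G. h \<notin> K \<and> h \<in> aug_bd G a \<and> h \<in> aug_bd G b)" for a b
    define R where "R = {w. stepK\<^sup>*\<^sup>* \<nu> w}"
    have Ra: "R \<subseteq> aug_vols G"
    proof
      fix w assume "w \<in> R"
      then have "stepK\<^sup>*\<^sup>* \<nu> w" by (simp add: R_def)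
      then show "w \<in> aug_vols G"
        by (induction rule: rtranclp_induct) (use nu in \<open>auto simp: stepK_def\<close>)
    qed
    have finR: "finite R" using Ra aug_vols_finite finite_subset by blast
    have \<nu>R: "\<nu> \<in> R" by (simp add: R_def)
    have \<nu>'R: "\<nu>' \<notin> R"
    proof
      assume "\<nu>' \<in> R"
      then have "stepK\<^sup>*\<^sup>* \<nu> \<nu>'" by (simp add: R_def)
      from walk_distinct[OF this] obtain us where us: "us \<noteq> []" "hd us = \<nu>" "last us = \<nu>'"
        "distinct us" "\<forall>i. Suc i < length us \<longrightarrow> stepK (us ! i) (us ! Suc i)" by blast
      define k where "k = length us - 1"
      have lk: "length us = Suc k" using us(1) k_def by simp
      have us0: "us ! 0 = \<nu>" using us(1,2) by (simp add: hd_conv_nth)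
      have usk: "us ! k = \<nu>'" using us(1,3) k_def by (simp add: last_conv_nth)
      have k1: "k \<ge> 1" using us0 usk False by (cases k) auto
      define hsel where "hsel i = (SOME h. h \<in> faces G \<and> h \<notin> K \<and> h \<in> aug_bd G (us ! i) \<and> h \<in> aug_bd G (us ! Suc i))" for i
      have hsel: "\<And>i. i < k \<Longrightarrow> hsel i \<in> faces G \<and> hsel i \<notin> K \<and> hsel i \<in> aug_bd G (us ! i) \<and> hsel i \<in> aug_bd G (us ! Suc i)"
      proof -
        fix i assume "i < k"
        then have "stepK (us ! i) (us ! Suc i)" using us(5) lk by simp
        then have "\<exists>h. h \<in> faces G \<and> h \<notin> K \<and> h \<in> aug_bd G (us ! i) \<and> h \<in> aug_bd G (us ! Suc i)"
          unfolding stepK_def by blast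
        then show "hsel i \<in> faces G \<and> hsel i \<notin> K \<and> hsel i \<in> aug_bd G (us ! i) \<and> hsel i \<in> aug_bd G (us ! Suc i)"
          unfolding hsel_def by (rule someI_ex)
      qed
      have usa: "\<And>i. i < length us \<Longrightarrow> us ! i \<in> aug_vols G"
      proof -
        fix i assume i: "i < length us"
        show "us ! i \<in> aug_vols G"
        proof (cases i)
          case 0 then show ?thesis using us0 nu by simp
        next
          case (Suc j) then show ?thesis using us(5) i by (auto simp: stepK_def)
        qed
      qed
      define fs where "fs = map hsel [0..<k]"
      define vs where "vs = take (k - 1) (tl us)"
      have lvs: "length vs = k - 1" using lk unfolding vs_def by simp
      have vsn: "\<And>i. i < k - 1 \<Longrightarrow> vs ! i = us ! Suc i"
        using lk unfolding vs_def by (simp add: nth_tl)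
      have fp: "face_path (aug_vols G) (aug_bd G) (faces G) fs vs"
        unfolding face_path_def
      proof (intro conjI)
        show "length fs = Suc (length vs)" using lvs k1 unfolding fs_def by simp
        show "set fs \<subseteq> faces G" using hsel unfolding fs_def by auto
        show "set vs \<subseteq> aug_vols G"
        proof
          fix x assume "x \<in> set vs"
          then obtain i where "i < k - 1" "x = vs ! i" using lvs by (auto simp: in_set_conv_nth)
          then show "x \<in> aug_vols G" using vsn usa lk by simp
        qed
        show "distinct vs" unfolding vs_def using us(4) by (simp add: distinct_tl)
        show "\<forall>i<length vs. fs ! i \<in> aug_bd G (vs ! i) \<and> fs ! Suc i \<in> aug_bd G (vs ! i)"
        proof (intro allI impI)
          fix i assume i: "i < length vs"
          then have i': "i < k - 1" using lvs by simp
          then have "fs ! i = hsel i" "fs ! Suc i = hsel (Suc i)" unfolding fs_def by auto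
          then show "fs ! i \<in> aug_bd G (vs ! i) \<and> fs ! Suc i \<in> aug_bd G (vs ! i)"
            using hsel[of i] hsel[of "Suc i"] i' vsn[OF i'] by auto
        qed
      qed
      have "hd fs = hsel 0" using k1 unfolding fs_def by (simp add: hd_map upt_rec)
      then have hfs: "hd fs \<in> aug_bd G \<nu>" using hsel[of 0] k1 us0 by simp
      have "last fs = hsel (k - 1)" using k1 unfolding fs_def by (simp add: last_map)
      then have lfs: "last fs \<in> aug_bd G \<nu>'" using hsel[of "k - 1"] k1 usk by simp
      have n1: "\<nu> \<notin> set vs"
      proof
        assume "\<nu> \<in> set vs"
        then obtain i where i: "i < k - 1" "vs ! i = \<nu>" using lvs by (auto simp: in_set_conv_nth)
        then have "us ! Suc i = us ! 0" using vsn us0 by simp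
        then show False using us(4) lk i by (simp add: nth_eq_iff_index_eq)
      qed
      have n2: "\<nu>' \<notin> set vs"
      proof
        assume "\<nu>' \<in> set vs"
        then obtain i where i: "i < k - 1" "vs ! i = \<nu>'" using lvs by (auto simp: in_set_conv_nth)
        then have "us ! Suc i = us ! k" using vsn usk by simp
        then show False using us(4) lk i by (simp add: nth_eq_iff_index_eq)
      qed
      have "set fs \<inter> K = {}" using hsel unfolding fs_def by auto
      then show False using P[OF fp hfs lfs n1 n2] by simp
    qed
    define T where "T = faces G \<inter> xs_sum (aug_bd G) R"
    have TF: "T \<subseteq> faces G" unfolding T_def by blast
    have evK: "even (card {w \<in> R. h \<in> aug_bd G w})" if h: "h \<in> faces G" "h \<notin> K" for h
    proof -
      have sub: "{w \<in> R. h \<in> aug_bd G w} = {w \<in> aug_vols G. h \<in> aug_bd G w} \<inter> R" using Ra by auto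
      from aug_card[OF h(1)] show ?thesis
      proof
        assume "card {w \<in> aug_vols G. h \<in> aug_bd G w} = 0"
        then have e: "{w \<in> aug_vols G. h \<in> aug_bd G w} = {}" using aug_vols_finite by simp
        have E: "{w \<in> R. h \<in> aug_bd G w} = {}" unfolding sub e by simp
        show ?thesis by (subst E) simp
      next
        assume "card {w \<in> aug_vols G. h \<in> aug_bd G w} = 2"
        then obtain a b where ab: "a \<noteq> b" "{w \<in> aug_vols G. h \<in> aug_bd G w} = {a, b}"
          by (auto simp: card_2_iff)
        then have "a \<in> aug_vols G" "b \<in> aug_vols G" "h \<in> aug_bd G a" "h \<in> aug_bd G b" by auto
        then have "stepK a b" "stepK b a" using h unfolding stepK_def by auto
        then have "a \<in> R \<longleftrightarrow> b \<in> R" unfolding R_def mem_Collect_eq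
          by (meson rtranclp.rtrancl_into_rtrancl)
        then have "{w \<in> R. h \<in> aug_bd G w} = {} \<or> {w \<in> R. h \<in> aug_bd G w} = {a, b}"
          using sub ab by auto
        then show ?thesis
        proof
          assume E: "{w \<in> R. h \<in> aug_bd G w} = {}"
          show ?thesis by (subst E) simp
        next
          assume E: "{w \<in> R. h \<in> aug_bd G w} = {a, b}"
          show ?thesis by (subst E) (use ab(1) in simp)
        qed
      qed
    qed
    have TK: "T \<subseteq> K"
    proof
      fix h assume "h \<in> T"
      then have h: "h \<in> faces G" "odd (card {w \<in> R. h \<in> aug_bd G w})" unfolding T_def xs_sum_def by auto
      then show "h \<in> K" using evK by blast
    qed
    have Tc: "closed_fs G T" unfolding T_def
      by (rule closed_fs_Int_faces, rule closed_fs_xs_sum[OF fin_faces finR]) (use Ra aug_bd_closed in blast)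
    have Tne: "T \<noteq> {}"
    proof -
      have "step_all\<^sup>*\<^sup>* \<nu> \<nu>'" using H_conn nu by blast
      then obtain x y where xy: "step_all x y" "x \<in> R" "y \<notin> R"
        using rtranclp_cross[of step_all \<nu> \<nu>' "\<lambda>w. w \<in> R"] \<nu>R \<nu>'R by blast
      then obtain h where h: "h \<in> faces G" "h \<in> aug_bd G x" "h \<in> aug_bd G y" "x \<in> aug_vols G" "y \<in> aug_vols G"
        unfolding step_all_def by blast
      have "x \<noteq> y" using xy by blast
      then have "{w \<in> aug_vols G. h \<in> aug_bd G w} = {x, y}" using aug_pair h by blast
      then have "{w \<in> R. h \<in> aug_bd G w} = {x}" using Ra xy(2,3) by auto
      then have "h \<in> T" using h(1) unfolding T_def xs_sum_def by simp
      then show ?thesis by blast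
    qed
    have "bd_faces G T = {}" using bd_faces_empty_iff[OF TF] Tc by simp
    then show ?thesis using TF TK Tne by blast
  qed
qed

end

context lat begin

definition spanned where "spanned Ec f \<longleftrightarrow> (\<exists>T \<subseteq> Ec. bd_faces G {f} = bd_faces G T)"

lemma spanned_mono: "spanned Ec f \<Longrightarrow> Ec \<subseteq> Ec' \<Longrightarrow> spanned Ec' f"
  unfolding spanned_def by blast

lemma span_step:
  assumes Ec: "Ec \<subseteq> faces G" "\<not> is_cut_set G Ec" and f: "f \<in> faces G"
    and cut: "is_cut_set G (Ec \<union> {f})"
  shows "spanned Ec f"
proof -
  obtain T0 where T0: "T0 \<subseteq> faces G" "T0 \<subseteq> Ec \<union> {f}" "T0 \<noteq> {}" "bd_faces G T0 = {}"
    using cut_cycle[OF cut] by blast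
  have fT: "f \<in> T0"
  proof (rule ccontr)
    assume "f \<notin> T0"
    then have "T0 \<subseteq> Ec" using T0(2) by blast
    then have "T0 = {}" using no_cycle[OF Ec(2) _ T0(1) T0(4)] by blast
    then show False using T0(3) by simp
  qed
  define T where "T = T0 - {f}"
  have TE: "T \<subseteq> Ec" using T0(2) unfolding T_def by blast
  have finT: "finite T" by (rule finite_subset[OF subset_trans[OF TE Ec(1)] fin_faces])
  have "T0 = symdiff {f} T" using fT unfolding T_def by (auto simp: symdiff_def)
  then have "symdiff (bd_faces G {f}) (bd_faces G T) = {}"
    using bd_faces_symdiff[of "{f}" T G] finT T0(4) by simp
  then have "bd_faces G {f} = bd_faces G T" by (simp add: symdiff_eq_empty)
  then show ?thesis using TE unfolding spanned_def by blast
qed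

lemma process_inv:
  assumes "Ec \<subseteq> faces G" "\<not> is_cut_set G Ec" "f \<in> faces G" "p1_process G (Ec, B) f = (Ec1, B1)"
  shows "Ec \<subseteq> Ec1 \<and> Ec1 \<subseteq> faces G \<and> \<not> is_cut_set G Ec1 \<and> spanned Ec1 f"
proof (cases "is_cut_set G (Ec \<union> {f})")
  case True
  then have "Ec1 = Ec" using assms(4) by (simp add: p1_process_def)
  then show ?thesis using span_step[OF assms(1,2,3) True] assms by simp
next
  case False
  then have "Ec1 = Ec \<union> {f}" using assms(4) by (simp add: p1_process_def)
  moreover have "spanned (Ec \<union> {f}) f" unfolding spanned_def by blast
  moreover have "Ec \<subseteq> Ec \<union> {f}" by blast
  moreover have "Ec \<union> {f} \<subseteq> faces G" using assms(1,3) by blast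
  ultimately show ?thesis using False by simp
qed

lemma foldl_inv:
  "set fl \<subseteq> faces G \<Longrightarrow> Ec \<subseteq> faces G \<Longrightarrow> \<not> is_cut_set G Ec \<Longrightarrow>
   foldl (p1_process G) (Ec, B) fl = (Ec', B') \<Longrightarrow>
   Ec \<subseteq> Ec' \<and> Ec' \<subseteq> faces G \<and> \<not> is_cut_set G Ec' \<and> (\<forall>f \<in> set fl. spanned Ec' f)"
proof (induction fl arbitrary: Ec B)
  case Nil then show ?case by simp
next
  case (Cons f fl)
  obtain Ec1 B1 where p: "p1_process G (Ec, B) f = (Ec1, B1)" by (cases "p1_process G (Ec, B) f")
  have f: "f \<in> faces G" using Cons.prems(1) by simp
  have i1: "Ec \<subseteq> Ec1 \<and> Ec1 \<subseteq> faces G \<and> \<not> is_cut_set G Ec1 \<and> spanned Ec1 f"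
    using process_inv[OF Cons.prems(2,3) f p] .
  have "foldl (p1_process G) (Ec1, B1) fl = (Ec', B')" using Cons.prems(4) p by simp
  then have i2: "Ec1 \<subseteq> Ec' \<and> Ec' \<subseteq> faces G \<and> \<not> is_cut_set G Ec' \<and> (\<forall>f \<in> set fl. spanned Ec' f)"
    using Cons.IH[of Ec1 B1] Cons.prems(1) i1 by simp
  have "\<forall>g \<in> set (f # fl). spanned Ec' g"
  proof
    fix g assume g: "g \<in> set (f # fl)"
    show "spanned Ec' g"
    proof (cases "g = f")
      case True
      have "spanned Ec1 f" "Ec1 \<subseteq> Ec'" using i1 i2 by blast+
      then show ?thesis using True spanned_mono by blast
    next
      case False
      then have "g \<in> set fl" using g by simp
      then show ?thesis using i2 by blast
    qed
  qed
  then show ?case using i1 i2 by blast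
qed

definition INV where
  "INV st \<longleftrightarrow> (case st of (Ec, B, Xp) \<Rightarrow>
     Ec \<subseteq> faces G \<and> \<not> is_cut_set G Ec \<and> Xp \<subseteq> faces G \<and> (\<forall>f\<in>Xp. spanned Ec f))"

lemma round_inv:
  assumes "p1_round G st st'" "INV st"
  shows "INV st'"
  using assms
proof (induction rule: p1_round.induct)
  case (1 Xp R B fl Ec Ec' B')
  have I: "Ec \<subseteq> faces G" "\<not> is_cut_set G Ec" "Xp \<subseteq> faces G" "\<forall>f\<in>Xp. spanned Ec f"
    using 1(6) by (auto simp: INV_def)
  have "set fl \<subseteq> faces G" using 1(2,4) by auto
  then have F: "Ec \<subseteq> Ec' \<and> Ec' \<subseteq> faces G \<and> \<not> is_cut_set G Ec' \<and> (\<forall>f \<in> set fl. spanned Ec' f)"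
    using foldl_inv[OF _ I(1,2) 1(5)] by blast
  have "R \<subseteq> faces G" using 1(2) by auto
  moreover have "\<forall>f\<in>Xp \<union> R. spanned Ec' f"
  proof
    fix f assume "f \<in> Xp \<union> R"
    then show "spanned Ec' f"
    proof
      assume "f \<in> Xp"
      then have "spanned Ec f" using I(4) by blast
      moreover have "Ec \<subseteq> Ec'" using F by blast
      ultimately show ?thesis by (rule spanned_mono)
    next
      assume "f \<in> R"
      then show ?thesis using F 1(4) by blast
    qed
  qed
  ultimately show ?case using F I(3) by (simp add: INV_def)
qed

lemma empty_not_cut: "\<not> is_cut_set G {}"
proof
  assume "is_cut_set G {}"
  then obtain T where "T \<subseteq> {}" "T \<noteq> {}" using cut_cycle by blast
  then show False by blast
qed

lemma p1_spans:
  assumes "p1_returns G SE Ecal"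
  shows "Ecal \<subseteq> faces G \<and> \<not> is_cut_set G Ecal \<and> (\<forall>f\<in>faces G. spanned Ecal f)"
proof -
  obtain B where r: "(p1_round G)\<^sup>*\<^sup>* ({}, SE, {}) (Ecal, B, faces G)"
    using assms by (auto simp: p1_returns_def)
  have "INV ({}, SE, {})" using empty_not_cut by (simp add: INV_def)
  have "INV (Ecal, B, faces G)"
    using r \<open>INV ({}, SE, {})\<close>
  proof (induction rule: rtranclp_induct)
    case base then show ?case .
  next
    case (step y z) then show ?case using round_inv by blast
  qed
  then show ?thesis by (simp add: INV_def)
qed

lemma exists_part:
  assumes E: "Ecal \<subseteq> faces G" "\<forall>f\<in>faces G. spanned Ecal f" and F0: "F0 \<subseteq> faces G"
  shows "\<exists>T \<subseteq> Ecal. bd_faces G F0 = bd_faces G T"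
proof -
  have finF0: "finite F0" by (rule finite_subset[OF F0 fin_faces])
  have finE: "\<And>T. T \<subseteq> Ecal \<Longrightarrow> finite T"
  proof -
    fix T assume "T \<subseteq> Ecal"
    then show "finite T" by (rule finite_subset[OF subset_trans[OF _ E(1)] fin_faces])
  qed
  show ?thesis using finF0 F0
  proof (induction F0 rule: finite_induct)
    case empty then show ?case by (intro exI[of _ "{}"]) (simp add: bd_faces_def)
  next
    case (insert f F)
    then obtain T1 where T1: "T1 \<subseteq> Ecal" "bd_faces G F = bd_faces G T1" by auto
    obtain T2 where T2: "T2 \<subseteq> Ecal" "bd_faces G {f} = bd_faces G T2"
      using E(2) insert.prems unfolding spanned_def by auto
    have "insert f F = symdiff {f} F" using insert.hyps by (auto simp: symdiff_def)
    then have "bd_faces G (insert f F) = symdiff (bd_faces G {f}) (bd_faces G F)"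
      using bd_faces_symdiff[of "{f}" F G] insert.hyps by simp
    also have "\<dots> = bd_faces G (symdiff T2 T1)"
      using T1 T2 bd_faces_symdiff[of T2 T1 G] finE by simp
    finally show ?case using T1(1) T2(1) by (intro exI[of _ "symdiff T2 T1"]) (auto simp: symdiff_def)
  qed
qed

end

theorem theorem1:
  fixes G :: "('x, 'e, 'f, 'v) complex3"
    and SE :: "'e set" and F0 :: "'f set" and Ecal :: "'f set"
  assumes "cell_complex3 G"
    and "connected_complex G"
    and "at_most_two_vols G"
    and "L1 G"
    and "L2 G"
    and "dual_connected G"
    and "F0 \<subseteq> faces G"
    and "SE = bd_faces G F0"
    and "p1_returns G SE Ecal"
  shows "\<exists>!Eh. Eh \<subseteq> Ecal \<and> bd_faces G Eh = SE"
proof -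
  interpret lat G using assms by (unfold_locales) auto
  have P: "Ecal \<subseteq> faces G" "\<not> is_cut_set G Ecal" "\<forall>f\<in>faces G. spanned Ecal f"
    using p1_spans[OF assms(9)] by auto
  obtain T where T: "T \<subseteq> Ecal" "bd_faces G F0 = bd_faces G T"
    using exists_part[OF P(1) P(3) assms(7)] by blast
  show ?thesis
  proof (rule ex1I[of _ T])
    show "T \<subseteq> Ecal \<and> bd_faces G T = SE" using T assms(8) by simp
  next
    fix Eh assume Eh: "Eh \<subseteq> Ecal \<and> bd_faces G Eh = SE"
    have finE: "\<And>X. X \<subseteq> Ecal \<Longrightarrow> finite X"
    proof -
      fix X assume "X \<subseteq> Ecal"
      then show "finite X" by (rule finite_subset[OF subset_trans[OF _ P(1)] fin_faces])
    qed
    define D where "D = symdiff Eh T"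
    have DE: "D \<subseteq> Ecal" using Eh T(1) unfolding D_def by (auto simp: symdiff_def)
    have "finite Eh" "finite T" using finE Eh T(1) by auto
    then have "bd_faces G D = symdiff (bd_faces G Eh) (bd_faces G T)"
      unfolding D_def by (rule bd_faces_symdiff)
    then have "bd_faces G D = {}" using Eh T(2) assms(8) by simp
    moreover have "D \<subseteq> faces G" using DE P(1) by blast
    ultimately have "D = {}" using no_cycle[OF P(2) DE] by blast
    then show "Eh = T" unfolding D_def by (simp add: symdiff_eq_empty)
  qed
qed

end
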